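(* Let $p$ be any of the following patterns, or any pattern in the same symmetry class as one of them: $(123,\{0\},\{0,1\})$, $(123,\{0\},\{0,3\})$, $(123,\{1\},\{0,1\})$, $(123,\{0,1\},\{0,2\})$, $(123,\{0,1\},\{1,2\})$, $(123,\{0,1\},\{0,3\})$, $(123,\{0,1\},\{1,3\})$, $(123,\{0,1\},\{2,3\})$, $(123,\{0,2\},\{1,2\})$, $(123,\{0,2\},\{0,3\})$, $(123,\{0,2\},\{1,3\})$, $(123,\{1,2\},\{0,3\})$, $(132,\{0\},\{0,1\})$, $(132,\{0\},\{0,3\})$, $(132,\{1\},\{0,3\})$, $(132,\{0,1\},\{0,1\})$, $(132,\{0,1\},\{0,2\})$, $(132,\{0,1\},\{1,2\})$, $(132,\{0,1\},\{3\})$, $(132,\{0,1\},\{1,3\})$, $(132,\{0,1\},\{2,3\})$, $(132,\{2\},\{2,3\})$, $(132,\{0,2\},\{1,2\})$, $(132,\{0,2\},\{0,3\})$, $(132,\{0,2\},\{1,3\})$, $(132,\{0,2\},\{2,3\})$, $(132,\{1,2\},\{0,3\})$, $(132,\{1,2\},\{1,3\})$, $(132,\{1,2\},\{2,3\})$, $(132,\{3\},\{2,3\})$, $(132,\{0,3\},\{0,3\})$, $(132,\{0,3\},\{1,3\})$, $(132,\{0,3\},\{2,3\})$, $(132,\{1,3\},\{1,3\})$, $(132,\{1,3\},\{2,3\})$. Then for all $n\ge2$, $a_n(p)=n!-(n-2)!\,(n-2)$.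
   Context: For $n\ge1$, $\mathcal S_n$ is the set of permutations $\pi=\pi_1\cdots\pi_n$ of $[n]$. A bi-vincular pattern of length $k$ is a triple $p=(\sigma,X,Y)$ with $\sigma\in\mathcal S_k$ and $X,Y\subseteq\{0,1,\dots,k\}$. A permutation $\pi\in\mathcal S_n$ contains $p$ if there are indices $1\le i_1<\dots<i_k\le n$ such that $(\pi_{i_1},\dots,\pi_{i_k})$ is order-isomorphic to $\sigma$ and, letting $j_1<\dots<j_k$ be the values $\pi_{i_1},\dots,\pi_{i_k}$ sorted increasingly and setting $i_0=j_0=0$, $i_{k+1}=j_{k+1}=n+1$, one has $i_{x+1}=i_x+1$ for all $x\in X$ and $j_{y+1}=j_y+1$ for all $y\in Y$. Otherwise $\pi$ avoids $p$; $a_n(p)$ is the number of $\pi\in\mathcal S_n$ avoiding $p$. Symmetries: $p^{i}=(\sigma^{-1},Y,X)$, $p^{r}=(\sigma^{r},\{k-x:x\in X\},Y)$, $p^{c}=(\sigma^{c},X,\{k-y:y\in Y\})$ with $\sigma^r_j=\sigma_{k+1-j}$, $\sigma^c_j=k+1-\sigma_j$; the symmetry class of $p$ consists of all patterns obtained from $p$ by finitely many applications of these maps. *)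

theory Defs
  imports "HOL-Combinatorics.Multiset_Permutations"
begin

text \<open>Permutations of [n] are lists w = pi_1 ... pi_n (1-based: pi_i = nth1 w i).
  A bi-vincular pattern is a triple (sigma, X, Y) with sigma a list (a permutation of [k], k = length sigma).\<close>

type_synonym bvpattern = "nat list \<times> nat set \<times> nat set"

definition nth1 :: "nat list \<Rightarrow> nat \<Rightarrow> nat" where
  "nth1 xs i = xs ! (i - 1)"

definition Sn :: "nat \<Rightarrow> nat list set" where
  "Sn n = permutations_of_set {1..n}"

definition contains :: "nat list \<Rightarrow> bvpattern \<Rightarrow> bool" where
  "contains w p = (case p of (\<sigma>, X, Y) \<Rightarrow>
     (let k = length \<sigma>; n = length w in
      \<exists>idx :: nat \<Rightarrow> nat.
        (\<forall>a\<in>{1..<k}. idx a < idx (a + 1)) \<and>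
        (\<forall>a\<in>{1..k}. 1 \<le> idx a \<and> idx a \<le> n) \<and>
        (\<forall>a\<in>{1..k}. \<forall>b\<in>{1..k}.
            (nth1 w (idx a) < nth1 w (idx b)) \<longleftrightarrow> (nth1 \<sigma> a < nth1 \<sigma> b)) \<and>
        (let I = (\<lambda>x. if x = 0 then 0 else if x = k + 1 then n + 1 else idx x);
             vals = sorted_list_of_set ((\<lambda>a. nth1 w (idx a)) ` {1..k});
             J = (\<lambda>y. if y = 0 then 0 else if y = k + 1 then n + 1 else nth1 vals y)
         in (\<forall>x\<in>X. x \<le> k \<longrightarrow> I (x + 1) = I x + 1) \<and>
            (\<forall>y\<in>Y. y \<le> k \<longrightarrow> J (y + 1) = J y + 1))))"

definition avoids :: "nat list \<Rightarrow> bvpattern \<Rightarrow> bool" where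
  "avoids w p = (\<not> contains w p)"

definition a_n :: "nat \<Rightarrow> bvpattern \<Rightarrow> nat" where
  "a_n n p = card {w \<in> Sn n. avoids w p}"

definition inv_perm_list :: "nat list \<Rightarrow> nat list" where
  "inv_perm_list \<sigma> = map (\<lambda>j. THE a. a \<in> {1..length \<sigma>} \<and> nth1 \<sigma> a = j) [1..<length \<sigma> + 1]"

definition sym_i :: "bvpattern \<Rightarrow> bvpattern" where
  "sym_i p = (case p of (\<sigma>, X, Y) \<Rightarrow> (inv_perm_list \<sigma>, Y, X))"

definition sym_r :: "bvpattern \<Rightarrow> bvpattern" where
  "sym_r p = (case p of (\<sigma>, X, Y) \<Rightarrow> (rev \<sigma>, (\<lambda>x. length \<sigma> - x) ` X, Y))"

definition sym_c :: "bvpattern \<Rightarrow> bvpattern" where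
  "sym_c p = (case p of (\<sigma>, X, Y) \<Rightarrow>
     (map (\<lambda>v. length \<sigma> + 1 - v) \<sigma>, X, (\<lambda>y. length \<sigma> - y) ` Y))"

inductive_set sym_class :: "bvpattern \<Rightarrow> bvpattern set" for p :: bvpattern where
  base: "p \<in> sym_class p"
| inv: "q \<in> sym_class p \<Longrightarrow> sym_i q \<in> sym_class p"
| rev: "q \<in> sym_class p \<Longrightarrow> sym_r q \<in> sym_class p"
| comp: "q \<in> sym_class p \<Longrightarrow> sym_c q \<in> sym_class p"

definition thm16_patterns :: "bvpattern list" where
  "thm16_patterns = [
    ([1,2,3], {0}, {0,1}), ([1,2,3], {0}, {0,3}), ([1,2,3], {1}, {0,1}),
    ([1,2,3], {0,1}, {0,2}), ([1,2,3], {0,1}, {1,2}), ([1,2,3], {0,1}, {0,3}),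
    ([1,2,3], {0,1}, {1,3}), ([1,2,3], {0,1}, {2,3}), ([1,2,3], {0,2}, {1,2}),
    ([1,2,3], {0,2}, {0,3}), ([1,2,3], {0,2}, {1,3}), ([1,2,3], {1,2}, {0,3}),
    ([1,3,2], {0}, {0,1}), ([1,3,2], {0}, {0,3}), ([1,3,2], {1}, {0,3}),
    ([1,3,2], {0,1}, {0,1}), ([1,3,2], {0,1}, {0,2}), ([1,3,2], {0,1}, {1,2}),
    ([1,3,2], {0,1}, {3}), ([1,3,2], {0,1}, {1,3}), ([1,3,2], {0,1}, {2,3}),
    ([1,3,2], {2}, {2,3}), ([1,3,2], {0,2}, {1,2}), ([1,3,2], {0,2}, {0,3}),
    ([1,3,2], {0,2}, {1,3}), ([1,3,2], {0,2}, {2,3}), ([1,3,2], {1,2}, {0,3}),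
    ([1,3,2], {1,2}, {1,3}), ([1,3,2], {1,2}, {2,3}), ([1,3,2], {3}, {2,3}),
    ([1,3,2], {0,3}, {0,3}), ([1,3,2], {0,3}, {1,3}), ([1,3,2], {0,3}, {2,3}),
    ([1,3,2], {1,3}, {1,3}), ([1,3,2], {1,3}, {2,3})]"

end

theory Submission
  imports Defs
begin

lemma sorted3: "(x::nat) < y \<Longrightarrow> y < z \<Longrightarrow> sorted_list_of_set {x,y,z} = [x,y,z]"
proof -
  assume "x<y" "y<z"
  have "{x,y,z} = set [x,y,z]" by simp
  then show ?thesis using \<open>x<y\<close> \<open>y<z\<close> by (simp only: sorted_list_of_set_sort_remdups) auto
qed

lemma master:
  assumes "finite S" "distinct (map fst cs)" "distinct (map snd cs)"
    "fst ` set cs \<subseteq> S" "snd ` set cs \<subseteq> S"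
  shows "card {f. f permutes S \<and> (\<forall>(i,v)\<in>set cs. f i = v)} = fact (card S - length cs)"
  using assms
proof (induction "length cs" arbitrary: cs S)
  case 0
  then show ?case by (simp add: card_permutations)
next
  case (Suc m cs0 S)
  then obtain c cs where cs0: "cs0 = c # cs" by (cases cs0) auto
  note Cprems = Suc.prems[unfolded cs0]
  obtain i v where c: "c = (i,v)" by (cases c)
  define t where "t = Transposition.transpose i v"
  define cs' where "cs' = map (\<lambda>(j,u). (j, t u)) cs"
  have iS: "i \<in> S" "v \<in> S" using Cprems c by auto
  have ni: "\<forall>(j,u)\<in>set cs. j \<noteq> i \<and> u \<noteq> v" using Cprems c by (force simp: image_iff)
  have IH: "card {g. g permutes (S - {i}) \<and> (\<forall>(j,u)\<in>set cs'. g j = u)} = fact (card (S - {i}) - length cs')"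
  proof (rule Suc.hyps(1))
    show "m = length cs'" using Suc.hyps(2) cs0 unfolding cs'_def by simp
    show "finite (S - {i})" using Cprems by simp
    show "distinct (map fst cs')" using Cprems unfolding cs'_def by (simp add: case_prod_unfold o_def)
    have "inj t" unfolding t_def by simp
    then show "distinct (map snd cs')" using Cprems unfolding cs'_def
      by (simp add: case_prod_unfold o_def distinct_map inj_on_def)
    show "fst ` set cs' \<subseteq> S - {i}" using Cprems ni unfolding cs'_def c by force
    show "snd ` set cs' \<subseteq> S - {i}" using Cprems ni iS unfolding cs'_def c t_def
      by (auto simp: transpose_def split: if_splits)
  qed
  have eq: "{f. f permutes S \<and> (\<forall>(j,u)\<in>set (c#cs). f j = u)} =
        (\<lambda>g. t \<circ> g) ` {g. g permutes (S - {i}) \<and> (\<forall>(j,u)\<in>set cs'. g j = u)}"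
  proof (rule set_eqI, rule iffI)
    fix f assume f: "f \<in> {f. f permutes S \<and> (\<forall>(j,u)\<in>set (c#cs). f j = u)}"
    define g where "g = t \<circ> f"
    have tt: "t \<circ> t = id" unfolding t_def by simp
    have "t \<circ> g = f" unfolding g_def t_def by (simp add: fun_eq_iff)
    moreover have "g permutes S" unfolding g_def t_def using f iS by (auto intro: permutes_compose permutes_swap_id)
    moreover have "g i = i" using f c unfolding g_def t_def by simp
    ultimately have gp: "g permutes (S - {i})" 
      by (metis Diff_iff permutes_superset singletonD)
    have "\<forall>(j,u)\<in>set cs'. g j = u" using f c unfolding g_def cs'_def by auto
    with gp \<open>t \<circ> g = f\<close> show "f \<in> (\<lambda>g. t \<circ> g) ` {g. g permutes (S - {i}) \<and> (\<forall>(j,u)\<in>set cs'. g j = u)}"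
      by blast
  next
    fix f assume "f \<in> (\<lambda>g. t \<circ> g) ` {g. g permutes (S - {i}) \<and> (\<forall>(j,u)\<in>set cs'. g j = u)}"
    then obtain g where g: "g permutes (S - {i})" "\<forall>(j,u)\<in>set cs'. g j = u" and f: "f = t \<circ> g" by blast
    have "g permutes S" using g(1) by (rule permutes_subset) auto
    then have "f permutes S" unfolding f t_def using iS by (auto intro: permutes_compose permutes_swap_id)
    moreover have "f i = v" using g(1) unfolding f t_def by (simp add: permutes_not_in)
    moreover have "\<forall>(j,u)\<in>set cs. f j = u" using g(2) unfolding f cs'_def t_def by auto
    ultimately show "f \<in> {f. f permutes S \<and> (\<forall>(j,u)\<in>set (c#cs). f j = u)}" using c by auto
  qed
  have inj: "inj_on (\<lambda>g. t \<circ> g) X" for X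
  proof (rule inj_onI)
    fix g1 g2 assume "t \<circ> g1 = t \<circ> g2"
    then have "t \<circ> (t \<circ> g1) = t \<circ> (t \<circ> g2)" by simp
    then show "g1 = g2" unfolding t_def by (simp add: fun_eq_iff)
  qed
  have "card (S - {i}) - length cs' = card S - length (c # cs)" using iS Cprems unfolding cs'_def by simp
  then show ?case unfolding cs0 eq card_image[OF inj] IH by simp
qed

definition inc3 :: "(nat \<Rightarrow> nat) \<Rightarrow> nat \<Rightarrow> bool" where
  "inc3 P n \<longleftrightarrow> 1 \<le> P 1 \<and> P 1 < P 2 \<and> P 2 < P 3 \<and> P 3 \<le> n"
definition adj :: "nat set \<Rightarrow> (nat \<Rightarrow> nat) \<Rightarrow> nat \<Rightarrow> bool" where
  "adj X P n \<longleftrightarrow> (0 \<in> X \<longrightarrow> P 1 = 1) \<and> (1 \<in> X \<longrightarrow> P 2 = P 1 + 1) \<and> (2 \<in> X \<longrightarrow> P 3 = P 2 + 1) \<and> (3 \<in> X \<longrightarrow> P 3 = n)"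
definition Occ :: "nat \<Rightarrow> (nat \<Rightarrow> nat) \<Rightarrow> nat list \<Rightarrow> nat set \<Rightarrow> nat set \<Rightarrow> bool" where
  "Occ n f \<sigma> X Y \<longleftrightarrow> (\<exists>P Q. inc3 P n \<and> inc3 Q n \<and> (\<forall>a\<in>{1,2,3}. f (P a) = Q (nth1 \<sigma> a)) \<and> adj X P n \<and> adj Y Q n)"
definition valid3 :: "nat list \<Rightarrow> bool" where
  "valid3 \<sigma> \<longleftrightarrow> length \<sigma> = 3 \<and> distinct \<sigma> \<and> set \<sigma> = {1,2,3}"

lemma adj_iff:
  "(\<forall>x\<in>X. x \<le> 3 \<longrightarrow> (if x + 1 = 0 then 0 else if x + 1 = 3 + 1 then n + 1 else P (x + 1)) =
       (if x = 0 then 0 else if x = 3 + 1 then n + 1 else P x) + 1) \<longleftrightarrow> adj X P n"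
proof -
  have "(\<forall>x\<in>X. x \<le> 3 \<longrightarrow> (if x + 1 = 0 then 0 else if x + 1 = 3 + 1 then n + 1 else P (x + 1)) =
       (if x = 0 then 0 else if x = 3 + 1 then n + 1 else P x) + 1) \<longleftrightarrow>
     (\<forall>x\<in>X. (x = 0 \<longrightarrow> P 1 = 1) \<and> (x = 1 \<longrightarrow> P 2 = P 1 + 1) \<and> (x = 2 \<longrightarrow> P 3 = P 2 + 1) \<and> (x = 3 \<longrightarrow> P 3 = n))"
    apply (rule ball_cong[OF refl])
    subgoal for x by (cases "x \<le> 3") (auto simp: le_Suc_eq numeral_eq_Suc)
    done
  also have "\<dots> \<longleftrightarrow> adj X P n" unfolding adj_def by blast
  finally show ?thesis .
qed

lemma contains3:
  assumes "length \<sigma> = 3"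
  shows "contains w (\<sigma>,X,Y) \<longleftrightarrow> (\<exists>idx. (\<forall>a\<in>{1..<3}. idx a < idx (a + 1)) \<and>
        (\<forall>a\<in>{1..3}. 1 \<le> idx a \<and> idx a \<le> length w) \<and>
        (\<forall>a\<in>{1..3}. \<forall>b\<in>{1..3}. (nth1 w (idx a) < nth1 w (idx b)) \<longleftrightarrow> (nth1 \<sigma> a < nth1 \<sigma> b)) \<and>
        adj X idx (length w) \<and> adj Y (nth1 (sorted_list_of_set ((\<lambda>a. nth1 w (idx a)) ` {1..3}))) (length w))"
  unfolding contains_def Let_def split assms adj_iff[symmetric] by simp

lemma sorted3': "(x::nat) < y \<Longrightarrow> y < z \<Longrightarrow> A = {x,y,z} \<Longrightarrow> sorted_list_of_set A = [x,y,z]"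
  using sorted3 by simp

lemma inc3_mono: "inc3 Q n \<Longrightarrow> x \<in> {1,2,3} \<Longrightarrow> y \<in> {1,2,3} \<Longrightarrow> Q x < Q y \<longleftrightarrow> x < y"
  unfolding inc3_def by auto

lemma adj_cong: "(\<forall>a\<in>{1,2,3}. P a = P' a) \<Longrightarrow> adj X P n = adj X P' n"
  unfolding adj_def by simp

lemma nth1_simps[simp]: "nth1 (a#xs) (Suc 0) = a" "nth1 [a,b,c] 2 = b" "nth1 [a,b,c] 3 = c"
  by (simp_all add: nth1_def)

lemma valid3_cases:
  assumes "valid3 \<sigma>"
  shows "\<sigma> = [1,2,3] \<or> \<sigma> = [1,3,2] \<or> \<sigma> = [2,1,3] \<or> \<sigma> = [2,3,1] \<or> \<sigma> = [3,1,2] \<or> \<sigma> = [3,2,1]"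
proof -
  obtain a b c where s: "\<sigma> = [a,b,c]" using assms unfolding valid3_def
    by (metis (no_types, lifting) length_0_conv length_Suc_conv numeral_3_eq_3)
  have "a \<in> {1,2,3}" "b \<in> {1,2,3}" "c \<in> {1,2,3}" "a \<noteq> b" "a \<noteq> c" "b \<noteq> c"
    using assms unfolding valid3_def s by (auto simp del: insert_iff)
  then show ?thesis unfolding s by auto
qed

lemma nth1_map_upt: "i \<in> {1..n} \<Longrightarrow> nth1 (map f [1..<n+1]) i = f i"
  unfolding nth1_def by (subst nth_map) (auto simp del: upt_Suc)

lemma perm_range: assumes "f permutes {1..n}" "i \<in> {1..n}" shows "f i \<in> {1..n}"
  using permutes_in_image[OF assms(1)] assms(2) by blast

lemma bridge:
  assumes f: "f permutes {1..n}" and v: "valid3 \<sigma>"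
  shows "contains (map f [1..<n+1]) (\<sigma>,X,Y) \<longleftrightarrow> Occ n f \<sigma> X Y"
proof -
  define w where "w = map f [1..<n+1]"
  have lw: "length w = n" unfolding w_def by simp
  have nw: "\<And>i. i \<in> {1..n} \<Longrightarrow> nth1 w i = f i" unfolding w_def by (rule nth1_map_upt)
  have l3: "length \<sigma> = 3" using v unfolding valid3_def by simp
  have e1: "{1..<3::nat} = {1,2}" and e2: "{1..3::nat} = {1,2,3}" by auto
  have C: "contains w (\<sigma>,X,Y) \<longleftrightarrow> (\<exists>idx. idx 1 < idx 2 \<and> idx 2 < idx 3 \<and>
        (\<forall>a\<in>{1,2,3}. 1 \<le> idx a \<and> idx a \<le> n) \<and>
        (\<forall>a\<in>{1,2,3}. \<forall>b\<in>{1,2,3}. (nth1 w (idx a) < nth1 w (idx b)) \<longleftrightarrow> (nth1 \<sigma> a < nth1 \<sigma> b)) \<and>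
        adj X idx n \<and> adj Y (nth1 (sorted_list_of_set ((\<lambda>a. nth1 w (idx a)) ` {1,2,3}))) n)"
  proof -
    have e3: "(\<forall>a\<in>{1,2::nat}. idx a < idx (a+1)) \<longleftrightarrow> idx 1 < idx 2 \<and> idx 2 < idx 3" for idx :: "nat \<Rightarrow> nat" by (simp add: numeral_2_eq_2 numeral_3_eq_3)
    show ?thesis unfolding contains3[OF l3] lw e1 e2 e3 by (simp only: conj_assoc)
  qed
  show ?thesis unfolding w_def[symmetric] C
  proof
    assume "\<exists>idx. idx 1 < idx 2 \<and> idx 2 < idx 3 \<and>
        (\<forall>a\<in>{1,2,3}. 1 \<le> idx a \<and> idx a \<le> n) \<and>
        (\<forall>a\<in>{1,2,3}. \<forall>b\<in>{1,2,3}. (nth1 w (idx a) < nth1 w (idx b)) \<longleftrightarrow> (nth1 \<sigma> a < nth1 \<sigma> b)) \<and>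
        adj X idx n \<and> adj Y (nth1 (sorted_list_of_set ((\<lambda>a. nth1 w (idx a)) ` {1,2,3}))) n"
    then obtain idx where i12: "idx 1 < idx 2" and i23: "idx 2 < idx 3" and
      ib: "\<forall>a\<in>{1,2,3}. 1 \<le> idx a \<and> idx a \<le> n" and
      io: "\<forall>a\<in>{1,2,3}. \<forall>b\<in>{1,2,3}. (nth1 w (idx a) < nth1 w (idx b)) \<longleftrightarrow> (nth1 \<sigma> a < nth1 \<sigma> b)" and
      aX: "adj X idx n" and aY: "adj Y (nth1 (sorted_list_of_set ((\<lambda>a. nth1 w (idx a)) ` {1,2,3}))) n"
      by blast
    define u where "u a = f (idx a)" for a
    have uw: "nth1 w (idx a) = u a" if "a \<in> {1,2,3}" for a using ib that nw unfolding u_def by auto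
    have ur: "u a \<in> {1..n}" if "a \<in> {1,2,3}" for a using ib that perm_range[OF f] unfolding u_def by auto
    have img: "(\<lambda>a. nth1 w (idx a)) ` {1,2,3} = {u 1, u 2, u 3}" using uw by simp
    have io': "\<forall>a\<in>{1,2,3}. \<forall>b\<in>{1,2,3}. (u a < u b) \<longleftrightarrow> (nth1 \<sigma> a < nth1 \<sigma> b)"
      using io uw by simp
    define Q where "Q = nth1 (sorted_list_of_set {u 1, u 2, u 3})"
    have main: "inc3 Q n \<and> (\<forall>a\<in>{1,2,3}. f (idx a) = Q (nth1 \<sigma> a))"
      using valid3_cases[OF v]
    proof (elim disjE)
      assume s: "\<sigma> = [1,2,3]"
      have "sorted_list_of_set {u 1, u 2, u 3} = [u 1, u 2, u 3]" using io' s by (intro sorted3') auto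
      then show ?thesis using s ur unfolding Q_def inc3_def u_def[symmetric] using io' by auto
    next
      assume s: "\<sigma> = [1,3,2]"
      have "sorted_list_of_set {u 1, u 2, u 3} = [u 1, u 3, u 2]" using io' s by (intro sorted3') auto
      then show ?thesis using s ur unfolding Q_def inc3_def u_def[symmetric] using io' by auto
    next
      assume s: "\<sigma> = [2,1,3]"
      have "sorted_list_of_set {u 1, u 2, u 3} = [u 2, u 1, u 3]" using io' s by (intro sorted3') auto
      then show ?thesis using s ur unfolding Q_def inc3_def u_def[symmetric] using io' by auto
    next
      assume s: "\<sigma> = [2,3,1]"
      have "sorted_list_of_set {u 1, u 2, u 3} = [u 3, u 1, u 2]" using io' s by (intro sorted3') auto
      then show ?thesis using s ur unfolding Q_def inc3_def u_def[symmetric] using io' by auto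
    next
      assume s: "\<sigma> = [3,1,2]"
      have "sorted_list_of_set {u 1, u 2, u 3} = [u 2, u 3, u 1]" using io' s by (intro sorted3') auto
      then show ?thesis using s ur unfolding Q_def inc3_def u_def[symmetric] using io' by auto
    next
      assume s: "\<sigma> = [3,2,1]"
      have "sorted_list_of_set {u 1, u 2, u 3} = [u 3, u 2, u 1]" using io' s by (intro sorted3') auto
      then show ?thesis using s ur unfolding Q_def inc3_def u_def[symmetric] using io' by auto
    qed
    have "inc3 idx n" unfolding inc3_def using i12 i23 ib by auto
    moreover have "adj Y Q n" using aY unfolding img Q_def .
    ultimately show "Occ n f \<sigma> X Y" unfolding Occ_def using main aX by blast
  next
    assume "Occ n f \<sigma> X Y"
    then obtain P Q where P: "inc3 P n" and Q: "inc3 Q n" and PQ: "\<forall>a\<in>{1,2,3}. f (P a) = Q (nth1 \<sigma> a)"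
      and aX: "adj X P n" and aY: "adj Y Q n" unfolding Occ_def by blast
    obtain s1 s2 s3 where s: "\<sigma> = [s1,s2,s3]" using l3
      by (metis (no_types, lifting) length_0_conv length_Suc_conv numeral_3_eq_3)
    have sset: "{s1,s2,s3} = {1,2,3}" using v s unfolding valid3_def by simp
    have sr: "s1 \<in> {1,2,3}" "s2 \<in> {1,2,3}" "s3 \<in> {1,2,3}" using sset by auto
    have Pr: "\<forall>a\<in>{1,2,3}. 1 \<le> P a \<and> P a \<le> n" using P unfolding inc3_def by auto
    have wv: "nth1 w (P a) = Q (nth1 \<sigma> a)" if "a \<in> {1,2,3}" for a using nw Pr PQ that by auto
    have img: "(\<lambda>a. nth1 w (P a)) ` {1,2,3} = {Q 1, Q 2, Q 3}"
    proof -
      have "(\<lambda>a. nth1 w (P a)) ` {1,2,3} = {Q s1, Q s2, Q s3}" using wv s by simp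
      also have "\<dots> = Q ` {s1,s2,s3}" by simp
      also have "\<dots> = {Q 1, Q 2, Q 3}" unfolding sset by simp
      finally show ?thesis .
    qed
    have srt: "sorted_list_of_set {Q 1, Q 2, Q 3} = [Q 1, Q 2, Q 3]" using Q unfolding inc3_def by (intro sorted3') auto
    have "adj Y (nth1 (sorted_list_of_set ((\<lambda>a. nth1 w (P a)) ` {1,2,3}))) n"
      unfolding img srt using aY by (simp add: adj_def)
    moreover have "\<forall>a\<in>{1,2,3}. \<forall>b\<in>{1,2,3}. (nth1 w (P a) < nth1 w (P b)) \<longleftrightarrow> (nth1 \<sigma> a < nth1 \<sigma> b)"
      using wv inc3_mono[OF Q] sr s by auto
    ultimately show "\<exists>idx. idx 1 < idx 2 \<and> idx 2 < idx 3 \<and>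
        (\<forall>a\<in>{1,2,3}. 1 \<le> idx a \<and> idx a \<le> n) \<and>
        (\<forall>a\<in>{1,2,3}. \<forall>b\<in>{1,2,3}. (nth1 w (idx a) < nth1 w (idx b)) \<longleftrightarrow> (nth1 \<sigma> a < nth1 \<sigma> b)) \<and>
        adj X idx n \<and> adj Y (nth1 (sorted_list_of_set ((\<lambda>a. nth1 w (idx a)) ` {1,2,3}))) n"
      using P Pr aX unfolding inc3_def by blast
  qed
qed

lemma perms_fin: "finite {f. f permutes {1..(n::nat)}}"
  by (simp add: finite_permutations)

lemma an_Occ:
  assumes v: "valid3 \<sigma>"
  shows "a_n n (\<sigma>,X,Y) = card {f. f permutes {1..n} \<and> \<not> Occ n f \<sigma> X Y}"
proof -
  define h where "h f = map f [1..<n+1]" for f :: "nat \<Rightarrow> nat"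
  define F where "F = {f. f permutes {1..n}}"
  have inj: "inj_on h F"
  proof (rule inj_onI)
    fix f g assume "f \<in> F" "g \<in> F" "h f = h g"
    then have fp: "f permutes {1..n}" and gp: "g permutes {1..n}" unfolding F_def by auto
    show "f = g"
    proof
      fix i show "f i = g i"
      proof (cases "i \<in> {1..n}")
        case True
        then show ?thesis using nth1_map_upt[OF True, of f] nth1_map_upt[OF True, of g] \<open>h f = h g\<close> unfolding h_def by metis
      next
        case False
        then show ?thesis using permutes_not_in[OF fp] permutes_not_in[OF gp] by simp
      qed
    qed
  qed
  have sub: "h ` F \<subseteq> Sn n"
  proof
    fix w assume "w \<in> h ` F"
    then obtain f where fp: "f permutes {1..n}" and w: "w = map f [1..<n+1]" unfolding F_def h_def by auto
    have e: "set [1..<n+1] = {1..n}" by (auto simp del: upt_Suc)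
    have "set w = {1..n}" unfolding w set_map e using permutes_image[OF fp] .
    moreover have "distinct w" unfolding w using permutes_inj_on[OF fp] by (simp add: distinct_map del: upt_Suc)
    ultimately show "w \<in> Sn n" unfolding Sn_def permutations_of_set_def by simp
  qed
  have cF: "card F = fact n" unfolding F_def by (rule card_permutations) auto
  have cS: "card (Sn n) = fact n" unfolding Sn_def by simp
  have img: "h ` F = Sn n"
    by (rule card_subset_eq) (use sub cF cS card_image[OF inj] in \<open>auto simp: Sn_def\<close>)
  have "{w \<in> Sn n. avoids w (\<sigma>,X,Y)} = h ` {f \<in> F. \<not> Occ n f \<sigma> X Y}"
  proof -
    have "{w \<in> Sn n. avoids w (\<sigma>,X,Y)} = {w \<in> h ` F. avoids w (\<sigma>,X,Y)}" unfolding img ..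
    also have "\<dots> = h ` {f \<in> F. avoids (h f) (\<sigma>,X,Y)}" by auto
    also have "{f \<in> F. avoids (h f) (\<sigma>,X,Y)} = {f \<in> F. \<not> Occ n f \<sigma> X Y}"
    proof (rule Collect_cong)
      fix f show "(f \<in> F \<and> avoids (h f) (\<sigma>, X, Y)) = (f \<in> F \<and> \<not> Occ n f \<sigma> X Y)"
        using bridge[OF _ v, of f n X Y] unfolding avoids_def h_def F_def by blast
    qed
    finally show ?thesis .
  qed
  then have "a_n n (\<sigma>,X,Y) = card {f \<in> F. \<not> Occ n f \<sigma> X Y}"
    unfolding a_n_def using card_image inj_on_subset[OF inj] by (metis (no_types, lifting) mem_Collect_eq subsetI)
  then show ?thesis unfolding F_def by simp
qed

lemma card_invol:
  assumes "\<And>f. f \<in> F \<Longrightarrow> T f \<in> F" "\<And>f. f \<in> F \<Longrightarrow> T (T f) = f"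
    "\<And>f. f \<in> F \<Longrightarrow> A (T f) \<longleftrightarrow> B f"
  shows "card {f \<in> F. A f} = card {f \<in> F. B f}"
proof -
  have "{f \<in> F. A f} = T ` {f \<in> F. B f}"
  proof (rule set_eqI, rule iffI)
    fix f assume "f \<in> {f \<in> F. A f}"
    then show "f \<in> T ` {f \<in> F. B f}" using assms by (metis (mono_tags, lifting) image_eqI mem_Collect_eq)
  qed (use assms in auto)
  moreover have "inj_on T {f \<in> F. B f}" by (rule inj_onI) (metis assms(2) mem_Collect_eq)
  ultimately show ?thesis by (simp add: card_image)
qed

definition rho :: "nat \<Rightarrow> nat \<Rightarrow> nat" where
  "rho n i = (if i \<in> {1..n} then n + 1 - i else i)"

lemma rho_perm: "rho n permutes {1..n}"
  by (rule inj_imp_permutes) (auto simp: rho_def inj_on_def)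

lemma rho_rho: "rho n (rho n i) = i"
  by (auto simp: rho_def)

lemma rho_comp: "rho n \<circ> rho n = id"
  by (auto simp: rho_rho fun_eq_iff)

lemma rho_val: "i \<in> {1..n} \<Longrightarrow> rho n i = n + 1 - i"
  by (simp add: rho_def)

definition validp :: "bvpattern \<Rightarrow> bool" where
  "validp p \<longleftrightarrow> (case p of (\<sigma>,X,Y) \<Rightarrow> valid3 \<sigma> \<and> X \<subseteq> {0..3} \<and> Y \<subseteq> {0..3})"

lemma mem_flip: assumes "(X::nat set) \<subseteq> {0..3}" shows "(k \<in> (\<lambda>x. 3 - x) ` X \<longleftrightarrow> (k \<le> 3 \<and> 3 - k \<in> X))"
proof
  assume "k \<in> (\<lambda>x. 3 - x) ` X"
  then obtain x where "x \<in> X" "k = 3 - x" by blast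
  moreover have "x \<le> 3" using \<open>x \<in> X\<close> \<open>X \<subseteq> {0..3}\<close> by auto
  ultimately show "k \<le> 3 \<and> 3 - k \<in> X" by simp
next
  assume "k \<le> 3 \<and> 3 - k \<in> X"
  then have "k = 3 - (3 - k)" "3 - k \<in> X" by auto
  then show "k \<in> (\<lambda>x. 3 - x) ` X" by blast
qed

lemma flip_flip: assumes "X \<subseteq> {0..3}" shows "(\<lambda>x::nat. 3 - x) ` (\<lambda>x. 3 - x) ` X = X"
proof -
  have "(\<lambda>x::nat. 3 - x) ` (\<lambda>x. 3 - x) ` X = (\<lambda>x. 3 - (3 - x)) ` X" by (simp add: image_image)
  also have "\<dots> = (\<lambda>x. x) ` X" using assms by (intro image_cong) auto
  finally show ?thesis by simp
qed

lemma flip_sub: "(\<lambda>x::nat. 3 - x) ` (X::nat set) \<subseteq> {0..3}" by auto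

lemma len3: "length \<sigma> = 3 \<Longrightarrow> \<exists>a b c. \<sigma> = [a,b,c]"
  by (metis (no_types, lifting) length_0_conv length_Suc_conv numeral_3_eq_3)

lemma adj_flip:
  assumes "X \<subseteq> {0..3}" "inc3 P n" "adj X P n"
  shows "adj ((\<lambda>x. 3 - x) ` X) (\<lambda>a. n + 1 - P (4 - a)) n"
  using assms(2,3) unfolding adj_def mem_flip[OF assms(1)] inc3_def by auto

lemma inc3_flip: "inc3 P n \<Longrightarrow> inc3 (\<lambda>a. n + 1 - P (4 - a)) n"
  unfolding inc3_def by auto

lemma occ_r:
  assumes f: "f permutes {1..n}" and v: "valid3 \<sigma>" and X: "X \<subseteq> {0..3}" and o: "Occ n f \<sigma> X Y"
  shows "Occ n (f \<circ> rho n) (rev \<sigma>) ((\<lambda>x. 3 - x) ` X) Y"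
proof -
  obtain P Q where P: "inc3 P n" and Q: "inc3 Q n" and PQ: "\<forall>a\<in>{1,2,3}. f (P a) = Q (nth1 \<sigma> a)"
      and aX: "adj X P n" and aY: "adj Y Q n" using o unfolding Occ_def by blast
  obtain s1 s2 s3 where s: "\<sigma> = [s1,s2,s3]" using v len3 unfolding valid3_def by blast
  define P' where "P' = (\<lambda>a. n + 1 - P (4 - a))"
  have r: "rho n (P' a) = P (4 - a)" if "a \<in> {1,2,3}" for a
    using P that unfolding P'_def inc3_def by (auto simp: rho_def)
  have "\<forall>a\<in>{1,2,3}. (f \<circ> rho n) (P' a) = Q (nth1 (rev \<sigma>) a)"
    using r PQ s by (auto simp: nth1_def)
  then show ?thesis unfolding Occ_def using inc3_flip[OF P] Q adj_flip[OF X P aX] aY unfolding P'_def by blast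
qed

lemma occ_c:
  assumes f: "f permutes {1..n}" and v: "valid3 \<sigma>" and Y: "Y \<subseteq> {0..3}" and o: "Occ n f \<sigma> X Y"
  shows "Occ n (rho n \<circ> f) (map (\<lambda>v. 3 + 1 - v) \<sigma>) X ((\<lambda>x. 3 - x) ` Y)"
proof -
  obtain P Q where P: "inc3 P n" and Q: "inc3 Q n" and PQ: "\<forall>a\<in>{1,2,3}. f (P a) = Q (nth1 \<sigma> a)"
      and aX: "adj X P n" and aY: "adj Y Q n" using o unfolding Occ_def by blast
  obtain s1 s2 s3 where s: "\<sigma> = [s1,s2,s3]" using v len3 unfolding valid3_def by blast
  have sr: "s1 \<in> {1,2,3}" "s2 \<in> {1,2,3}" "s3 \<in> {1,2,3}" using v s unfolding valid3_def by auto
  define Q' where "Q' = (\<lambda>a. n + 1 - Q (4 - a))"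
  have r: "rho n (Q b) = Q' (4 - b)" if "b \<in> {1,2,3}" for b
    using Q that unfolding Q'_def inc3_def by (auto simp: rho_def)
  have "\<forall>a\<in>{1,2,3}. (rho n \<circ> f) (P a) = Q' (nth1 (map (\<lambda>v. 3 + 1 - v) \<sigma>) a)"
    using r PQ s sr by (auto simp: nth1_def)
  then show ?thesis unfolding Occ_def using inc3_flip[OF Q] P adj_flip[OF Y Q aY] aX unfolding Q'_def by blast
qed

lemma occ_i:
  assumes f: "f permutes {1..n}" and t: "\<forall>b\<in>{1,2,3}. nth1 \<tau> b \<in> {1,2,3} \<and> nth1 \<sigma> (nth1 \<tau> b) = b"
    and o: "Occ n f \<sigma> X Y"
  shows "Occ n (inv f) \<tau> Y X"
proof -
  obtain P Q where P: "inc3 P n" and Q: "inc3 Q n" and PQ: "\<forall>a\<in>{1,2,3}. f (P a) = Q (nth1 \<sigma> a)"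
      and aX: "adj X P n" and aY: "adj Y Q n" using o unfolding Occ_def by blast
  have "\<forall>b::nat\<in>{1,2,3}. inv f (Q b) = P (nth1 \<tau> b)"
  proof
    fix b :: nat assume b: "b \<in> {1,2,3}"
    then have "f (P (nth1 \<tau> b)) = Q b" using t PQ by metis
    then show "inv f (Q b) = P (nth1 \<tau> b)" using permutes_inv_eq[OF f] by blast
  qed
  then show ?thesis unfolding Occ_def using P Q aX aY by blast
qed

lemma the_pos:
  assumes "distinct \<sigma>" "length \<sigma> = 3" "a0 \<in> {1..3}" "nth1 \<sigma> a0 = j"
  shows "(THE a. a \<in> {1..3} \<and> nth1 \<sigma> a = j) = a0"
proof (rule the_equality)
  show "a0 \<in> {1..3} \<and> nth1 \<sigma> a0 = j" using assms by simp
next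
  fix a assume a: "a \<in> {1..3} \<and> nth1 \<sigma> a = j"
  then have "\<sigma> ! (a - 1) = \<sigma> ! (a0 - 1)" using assms unfolding nth1_def by simp
  then have "a - 1 = a0 - 1" using assms a nth_eq_iff_index_eq by fastforce
  then show "a = a0" using a assms by auto
qed

lemma invp:
  assumes v: "valid3 \<sigma>"
  shows "\<forall>b\<in>{1,2,3}. nth1 (inv_perm_list \<sigma>) b \<in> {1,2,3} \<and> nth1 \<sigma> (nth1 (inv_perm_list \<sigma>) b) = b"
    and "\<forall>a\<in>{1,2,3}. nth1 \<sigma> a \<in> {1,2,3} \<and> nth1 (inv_perm_list \<sigma>) (nth1 \<sigma> a) = a"
    and "valid3 (inv_perm_list \<sigma>)"
proof -
  have l: "length \<sigma> = 3" and d: "distinct \<sigma>" and st: "set \<sigma> = {1,2,3}" using v unfolding valid3_def by auto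
  define g where "g j = (THE a. a \<in> {1..3} \<and> nth1 \<sigma> a = j)" for j
  have t: "inv_perm_list \<sigma> = map g [1..<3+1]" unfolding inv_perm_list_def g_def l ..
  have tn: "nth1 (inv_perm_list \<sigma>) b = g b" if "b \<in> {1,2,3}" for b
    unfolding t by (rule nth1_map_upt) (use that in auto)
  have ex: "\<exists>a0\<in>{1..3}. nth1 \<sigma> a0 = b" if "b \<in> {1,2,3}" for b
  proof -
    have "b \<in> set \<sigma>" using that st by simp
    then obtain i where "i < 3" "\<sigma> ! i = b" using l by (auto simp: in_set_conv_nth)
    then show ?thesis unfolding nth1_def by (intro bexI[of _ "i+1"]) auto
  qed
  have A: "\<forall>b\<in>{1,2,3}. g b \<in> {1,2,3} \<and> nth1 \<sigma> (g b) = b"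
  proof
    fix b :: nat assume b: "b \<in> {1,2,3}"
    obtain a0 where a0: "a0 \<in> {1..3}" "nth1 \<sigma> a0 = b" using ex[OF b] by blast
    have "g b = a0" unfolding g_def by (rule the_pos[OF d l a0])
    then show "g b \<in> {1,2,3} \<and> nth1 \<sigma> (g b) = b" using a0 by auto
  qed
  have sv: "nth1 \<sigma> a \<in> {1,2,3}" if "a \<in> {1,2,3}" for a
  proof -
    have "\<sigma> ! (a - 1) \<in> set \<sigma>" using that l by (intro nth_mem) auto
    then show ?thesis using st unfolding nth1_def by simp
  qed
  have B: "\<forall>a\<in>{1,2,3}. nth1 \<sigma> a \<in> {1,2,3} \<and> g (nth1 \<sigma> a) = a"
  proof
    fix a :: nat assume a: "a \<in> {1,2,3}"
    have "g (nth1 \<sigma> a) = a" unfolding g_def by (rule the_pos[OF d l]) (use a in auto)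
    then show "nth1 \<sigma> a \<in> {1,2,3} \<and> g (nth1 \<sigma> a) = a" using sv[OF a] by simp
  qed
  show "\<forall>b\<in>{1,2,3}. nth1 (inv_perm_list \<sigma>) b \<in> {1,2,3} \<and> nth1 \<sigma> (nth1 (inv_perm_list \<sigma>) b) = b"
    using A tn by simp
  show "\<forall>a\<in>{1,2,3}. nth1 \<sigma> a \<in> {1,2,3} \<and> nth1 (inv_perm_list \<sigma>) (nth1 \<sigma> a) = a"
    using B tn sv by simp
  have e: "set [1..<3+1] = {1,2,3::nat}" by auto
  have "set (inv_perm_list \<sigma>) = {1,2,3}"
  proof -
    have "set (inv_perm_list \<sigma>) = g ` {1,2,3}" unfolding t set_map e ..
    also have "\<dots> = {1,2,3}"
    proof
      show "g ` {1,2,3} \<subseteq> {1,2,3}" using A by blast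
      show "{1,2,3} \<subseteq> g ` {1,2,3}"
      proof
        fix a :: nat assume "a \<in> {1,2,3}"
        then show "a \<in> g ` {1,2,3}" using B sv by (metis image_eqI)
      qed
    qed
    finally show ?thesis .
  qed
  moreover have "distinct (inv_perm_list \<sigma>)"
  proof -
    have "inj_on g (set [1..<3+1])" unfolding e by (rule inj_onI) (metis A)
    then show ?thesis unfolding t by (simp add: distinct_map del: upt_Suc)
  qed
  moreover have "length (inv_perm_list \<sigma>) = 3" unfolding t by simp
  ultimately show "valid3 (inv_perm_list \<sigma>)" unfolding valid3_def by simp
qed

lemma card_invol':
  assumes "\<And>f. Fp f \<Longrightarrow> Fp (T f)" "\<And>f. Fp f \<Longrightarrow> T (T f) = f"
    "\<And>f. Fp f \<Longrightarrow> A (T f) \<longleftrightarrow> B f"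
  shows "card {f. Fp f \<and> A f} = card {f. Fp f \<and> B f}"
  using card_invol[of "{f. Fp f}" T A B] assms by simp

lemma perms_comp_rho: "f permutes {1..n} \<Longrightarrow> f \<circ> rho n permutes {1..n}"
  using permutes_compose[OF rho_perm] by blast

lemma perms_rho_comp: "f permutes {1..n} \<Longrightarrow> rho n \<circ> f permutes {1..n}"
  using permutes_compose[OF _ rho_perm] by blast

lemma sym_r_inv:
  assumes "validp p"
  shows "validp (sym_r p) \<and> a_n n (sym_r p) = a_n n p"
proof -
  obtain \<sigma> X Y where p: "p = (\<sigma>,X,Y)" by (cases p)
  have v: "valid3 \<sigma>" and X: "X \<subseteq> {0..3}" and Y: "Y \<subseteq> {0..3}" using assms p unfolding validp_def by auto
  have l: "length \<sigma> = 3" using v unfolding valid3_def by simp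
  have sr: "sym_r p = (rev \<sigma>, (\<lambda>x. 3 - x) ` X, Y)" unfolding p sym_r_def using l by simp
  have v': "valid3 (rev \<sigma>)" using v unfolding valid3_def by simp
  have "validp (sym_r p)" unfolding sr validp_def using v' flip_sub Y by simp
  moreover have "a_n n (sym_r p) = a_n n p"
    unfolding sr an_Occ[OF v'] unfolding p an_Occ[OF v]
  proof (rule card_invol'[where T = "\<lambda>f. f \<circ> rho n"])
    fix f assume f: "f permutes {1..n}"
    then show "f \<circ> rho n permutes {1..n}" using perms_comp_rho by blast
    show "f \<circ> rho n \<circ> rho n = f" by (simp add: comp_assoc rho_comp)
    have f': "f \<circ> rho n permutes {1..n}" using f perms_comp_rho by blast
    show "(\<not> Occ n (f \<circ> rho n) (rev \<sigma>) ((\<lambda>x. 3 - x) ` X) Y) = (\<not> Occ n f \<sigma> X Y)"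
    proof -
      have "Occ n f \<sigma> X Y" if o: "Occ n (f \<circ> rho n) (rev \<sigma>) ((\<lambda>x. 3 - x) ` X) Y"
      proof -
        have "Occ n (f \<circ> rho n \<circ> rho n) (rev (rev \<sigma>)) ((\<lambda>x. 3 - x) ` (\<lambda>x. 3 - x) ` X) Y"
          by (rule occ_r[OF f' v' flip_sub o])
        then show ?thesis using flip_flip[OF X] by (simp add: comp_assoc rho_comp)
      qed
      then show ?thesis using occ_r[OF _ v X] f by blast
    qed
  qed
  ultimately show ?thesis ..
qed

lemma sym_c_inv:
  assumes "validp p"
  shows "validp (sym_c p) \<and> a_n n (sym_c p) = a_n n p"
proof -
  obtain \<sigma> X Y where p: "p = (\<sigma>,X,Y)" by (cases p)
  have v: "valid3 \<sigma>" and X: "X \<subseteq> {0..3}" and Y: "Y \<subseteq> {0..3}" using assms p unfolding validp_def by auto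
  have l: "length \<sigma> = 3" using v unfolding valid3_def by simp
  have sc: "sym_c p = (map (\<lambda>v. 3 + 1 - v) \<sigma>, X, (\<lambda>x. 3 - x) ` Y)" unfolding p sym_c_def using l by simp
  obtain s1 s2 s3 where s: "\<sigma> = [s1,s2,s3]" using l len3 by blast
  have sr: "s1 \<in> {1,2,3}" "s2 \<in> {1,2,3}" "s3 \<in> {1,2,3}" "s1 \<noteq> s2" "s1 \<noteq> s3" "s2 \<noteq> s3" using v s unfolding valid3_def by auto
  have v': "valid3 (map (\<lambda>v. 3 + 1 - v) \<sigma>)" using sr unfolding valid3_def s by auto
  have mm: "map (\<lambda>v. 3 + 1 - v) (map (\<lambda>v. 3 + 1 - v) \<sigma>) = \<sigma>" using sr unfolding s by auto
  have "validp (sym_c p)" unfolding sc validp_def using v' flip_sub X by simp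
  moreover have "a_n n (sym_c p) = a_n n p"
    unfolding sc an_Occ[OF v'] unfolding p an_Occ[OF v]
  proof (rule card_invol'[where T = "\<lambda>f. rho n \<circ> f"])
    fix f assume f: "f permutes {1..n}"
    then show "rho n \<circ> f permutes {1..n}" using perms_rho_comp by blast
    show "rho n \<circ> (rho n \<circ> f) = f" by (simp add: comp_assoc[symmetric] rho_comp)
    have f': "rho n \<circ> f permutes {1..n}" using f perms_rho_comp by blast
    show "(\<not> Occ n (rho n \<circ> f) (map (\<lambda>v. 3 + 1 - v) \<sigma>) X ((\<lambda>x. 3 - x) ` Y)) = (\<not> Occ n f \<sigma> X Y)"
    proof -
      have "Occ n f \<sigma> X Y" if o: "Occ n (rho n \<circ> f) (map (\<lambda>v. 3 + 1 - v) \<sigma>) X ((\<lambda>x. 3 - x) ` Y)"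
      proof -
        have "Occ n (rho n \<circ> (rho n \<circ> f)) (map (\<lambda>v. 3 + 1 - v) (map (\<lambda>v. 3 + 1 - v) \<sigma>)) X ((\<lambda>x. 3 - x) ` (\<lambda>x. 3 - x) ` Y)"
          by (rule occ_c[OF f' v' flip_sub o])
        then show ?thesis unfolding mm flip_flip[OF Y] by (simp add: comp_assoc[symmetric] rho_comp)
      qed
      then show ?thesis using occ_c[OF _ v Y] f by blast
    qed
  qed
  ultimately show ?thesis ..
qed

lemma sym_i_inv:
  assumes "validp p"
  shows "validp (sym_i p) \<and> a_n n (sym_i p) = a_n n p"
proof -
  obtain \<sigma> X Y where p: "p = (\<sigma>,X,Y)" by (cases p)
  have v: "valid3 \<sigma>" and X: "X \<subseteq> {0..3}" and Y: "Y \<subseteq> {0..3}" using assms p unfolding validp_def by auto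
  have si: "sym_i p = (inv_perm_list \<sigma>, Y, X)" unfolding p sym_i_def by simp
  note I = invp[OF v]
  have "validp (sym_i p)" unfolding si validp_def using I(3) X Y by simp
  moreover have "a_n n (sym_i p) = a_n n p"
    unfolding si an_Occ[OF I(3)] unfolding p an_Occ[OF v]
  proof (rule card_invol'[where T = "inv"])
    fix f assume f: "f permutes {1..(n::nat)}"
    then show "inv f permutes {1..n}" using permutes_inv by blast
    show "inv (inv f) = f" using f permutes_inv_inv by blast
    have f': "inv f permutes {1..n}" using f permutes_inv by blast
    show "(\<not> Occ n (inv f) (inv_perm_list \<sigma>) Y X) = (\<not> Occ n f \<sigma> X Y)"
    proof -
      have "Occ n (inv f) (inv_perm_list \<sigma>) Y X \<Longrightarrow> Occ n f \<sigma> X Y"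
        using occ_i[OF f' I(2)] permutes_inv_inv f by fastforce
      then show ?thesis using occ_i[OF _ I(1)] f by blast
    qed
  qed
  ultimately show ?thesis ..
qed

lemma sym_class_inv:
  assumes "q \<in> sym_class p" "validp p"
  shows "validp q \<and> a_n n q = a_n n p"
  using assms(1)
proof (induction rule: sym_class.induct)
  case base then show ?case using assms(2) by simp
next
  case (inv q) then show ?case using sym_i_inv by metis
next
  case (rev q) then show ?case using sym_r_inv by metis
next
  case (comp q) then show ?case using sym_c_inv by metis
qed

definition sat :: "(nat \<times> nat) list \<Rightarrow> (nat \<Rightarrow> nat) \<Rightarrow> bool" where
  "sat cs f \<longleftrightarrow> (\<forall>(i,v)\<in>set cs. f i = v)"

definition okc :: "nat \<Rightarrow> (nat \<times> nat) list \<Rightarrow> bool" where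
  "okc n cs \<longleftrightarrow> distinct (map fst cs) \<and> distinct (map snd cs) \<and> fst ` set cs \<subseteq> {1..n} \<and> snd ` set cs \<subseteq> {1..n}"

lemma count_one:
  assumes "okc n cs"
  shows "card {f. f permutes {1..n} \<and> sat cs f} = fact (n - length cs)"
  using master[of "{1..n}" cs] assms unfolding okc_def sat_def by simp

lemma count_union:
  assumes K: "finite K" and ok: "\<And>x. x \<in> K \<Longrightarrow> okc n (cs x) \<and> length (cs x) = m"
    and dj: "\<And>x y f. x \<in> K \<Longrightarrow> y \<in> K \<Longrightarrow> f permutes {1..n} \<Longrightarrow> sat (cs x) f \<Longrightarrow> sat (cs y) f \<Longrightarrow> x = y"
  shows "card {f. f permutes {1..n} \<and> (\<exists>x\<in>K. sat (cs x) f)} = card K * fact (n - m)"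
proof -
  define A where "A x = {f. f permutes {1..n} \<and> sat (cs x) f}" for x
  have e: "{f. f permutes {1..n} \<and> (\<exists>x\<in>K. sat (cs x) f)} = (\<Union>x\<in>K. A x)" unfolding A_def by auto
  have "card (\<Union>x\<in>K. A x) = (\<Sum>x\<in>K. card (A x))"
  proof (rule card_UN_disjoint[OF K])
    show "\<forall>x\<in>K. finite (A x)" unfolding A_def using finite_permutations[of "{1..n}"] by (auto intro: rev_finite_subset)
    show "\<forall>x\<in>K. \<forall>y\<in>K. x \<noteq> y \<longrightarrow> A x \<inter> A y = {}" unfolding A_def using dj by blast
  qed
  also have "\<dots> = (\<Sum>x\<in>K. fact (n - m))" using ok count_one unfolding A_def by (intro sum.cong) auto
  finally show ?thesis unfolding e by simp
qed

lemma count_A: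
  assumes "i \<in> {1..n}" "i' \<in> {1..n}" "v \<in> {1..n}" "v' \<in> {1..n}" "i \<noteq> i'" "v \<noteq> v'" "2 \<le> n"
  shows "card {f. f permutes {1..n} \<and> f i = v \<and> f i' \<noteq> v'} = fact (n - 2) * (n - 2)"
proof -
  have o1: "okc n [(i,v)]" and o2: "okc n [(i,v),(i',v')]" using assms unfolding okc_def by auto
  have c1: "card {f. f permutes {1..n} \<and> f i = v} = fact (n - 1)" using count_one[OF o1] by (simp add: sat_def)
  have c2: "card {f. f permutes {1..n} \<and> f i = v \<and> f i' = v'} = fact (n - 2)" using count_one[OF o2] by (simp add: sat_def numeral_2_eq_2)
  have e: "{f. f permutes {1..n} \<and> f i = v \<and> f i' \<noteq> v'} = {f. f permutes {1..n} \<and> f i = v} - {f. f permutes {1..n} \<and> f i = v \<and> f i' = v'}" by auto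
  have fin: "finite {f. f permutes {1..n} \<and> f i = v \<and> f i' = v'}" using finite_permutations[of "{1..n}"] by (auto intro: rev_finite_subset)
  have "card {f. f permutes {1..n} \<and> f i = v \<and> f i' \<noteq> v'} = fact (n - 1) - fact (n - 2)"
    unfolding e by (subst card_Diff_subset) (use fin c1 c2 in auto)
  also have "\<dots> = fact (n - 2) * (n - 2)"
  proof -
    obtain k where k: "n = k + 2" using assms(7) by (metis le_add_diff_inverse2)
    show ?thesis unfolding k by (simp add: algebra_simps)
  qed
  finally show ?thesis .
qed

lemma OccE_123:
  "Occ n f [1,2,3] X Y \<longleftrightarrow> (\<exists>p1 p2 p3 q1 q2 q3. 1 \<le> p1 \<and> p1 < p2 \<and> p2 < p3 \<and> p3 \<le> n \<and>
     1 \<le> q1 \<and> q1 < q2 \<and> q2 < q3 \<and> q3 \<le> n \<and>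
     f p1 = q1 \<and> f p2 = q2 \<and> f p3 = q3 \<and>
     (0 \<in> X \<longrightarrow> p1 = 1) \<and> (1 \<in> X \<longrightarrow> p2 = p1 + 1) \<and> (2 \<in> X \<longrightarrow> p3 = p2 + 1) \<and> (3 \<in> X \<longrightarrow> p3 = n) \<and>
     (0 \<in> Y \<longrightarrow> q1 = 1) \<and> (1 \<in> Y \<longrightarrow> q2 = q1 + 1) \<and> (2 \<in> Y \<longrightarrow> q3 = q2 + 1) \<and> (3 \<in> Y \<longrightarrow> q3 = n))"
  (is "?L \<longleftrightarrow> ?R")
proof
  assume ?L
  then obtain P Q where H: "inc3 P n" "inc3 Q n" "\<forall>a\<in>{1,2,3}. f (P a) = Q (nth1 [1,2,3] a)" "adj X P n" "adj Y Q n"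
    unfolding Occ_def by blast
  have "f (P 1) = Q 1" "f (P 2) = Q 2" "f (P 3) = Q 3" using H(3) by auto
  then show ?R using H(1,2,4,5) unfolding inc3_def adj_def by blast
next
  assume ?R
  then obtain p1 p2 p3 q1 q2 q3 where H: "1 \<le> p1" "p1 < p2" "p2 < p3" "p3 \<le> n"
     "1 \<le> q1" "q1 < q2" "q2 < q3" "q3 \<le> n"
     "f p1 = q1" "f p2 = q2" "f p3 = q3" 
     "(0 \<in> X \<longrightarrow> p1 = 1) \<and> (1 \<in> X \<longrightarrow> p2 = p1 + 1) \<and> (2 \<in> X \<longrightarrow> p3 = p2 + 1) \<and> (3 \<in> X \<longrightarrow> p3 = n)"
     "(0 \<in> Y \<longrightarrow> q1 = 1) \<and> (1 \<in> Y \<longrightarrow> q2 = q1 + 1) \<and> (2 \<in> Y \<longrightarrow> q3 = q2 + 1) \<and> (3 \<in> Y \<longrightarrow> q3 = n)" by blast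
  define P where "P a = (if a = 1 then p1 else if a = 2 then p2 else p3)" for a :: nat
  define Q where "Q a = (if a = 1 then q1 else if a = 2 then q2 else q3)" for a :: nat
  have "inc3 P n" "inc3 Q n" "adj X P n" "adj Y Q n" using H unfolding inc3_def adj_def P_def Q_def by simp_all
  moreover have "\<forall>a\<in>{1,2,3}. f (P a) = Q (nth1 [1,2,3] a)" using H unfolding P_def Q_def by auto
  ultimately show ?L unfolding Occ_def by blast
qed

lemma OccE_132:
  "Occ n f [1,3,2] X Y \<longleftrightarrow> (\<exists>p1 p2 p3 q1 q2 q3. 1 \<le> p1 \<and> p1 < p2 \<and> p2 < p3 \<and> p3 \<le> n \<and>
     1 \<le> q1 \<and> q1 < q2 \<and> q2 < q3 \<and> q3 \<le> n \<and>
     f p1 = q1 \<and> f p2 = q3 \<and> f p3 = q2 \<and>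
     (0 \<in> X \<longrightarrow> p1 = 1) \<and> (1 \<in> X \<longrightarrow> p2 = p1 + 1) \<and> (2 \<in> X \<longrightarrow> p3 = p2 + 1) \<and> (3 \<in> X \<longrightarrow> p3 = n) \<and>
     (0 \<in> Y \<longrightarrow> q1 = 1) \<and> (1 \<in> Y \<longrightarrow> q2 = q1 + 1) \<and> (2 \<in> Y \<longrightarrow> q3 = q2 + 1) \<and> (3 \<in> Y \<longrightarrow> q3 = n))"
  (is "?L \<longleftrightarrow> ?R")
proof
  assume ?L
  then obtain P Q where H: "inc3 P n" "inc3 Q n" "\<forall>a\<in>{1,2,3}. f (P a) = Q (nth1 [1,3,2] a)" "adj X P n" "adj Y Q n"
    unfolding Occ_def by blast
  have "f (P 1) = Q 1" "f (P 2) = Q 3" "f (P 3) = Q 2" using H(3) by auto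
  then show ?R using H(1,2,4,5) unfolding inc3_def adj_def by blast
next
  assume ?R
  then obtain p1 p2 p3 q1 q2 q3 where H: "1 \<le> p1" "p1 < p2" "p2 < p3" "p3 \<le> n"
     "1 \<le> q1" "q1 < q2" "q2 < q3" "q3 \<le> n"
     "f p1 = q1" "f p2 = q3" "f p3 = q2" 
     "(0 \<in> X \<longrightarrow> p1 = 1) \<and> (1 \<in> X \<longrightarrow> p2 = p1 + 1) \<and> (2 \<in> X \<longrightarrow> p3 = p2 + 1) \<and> (3 \<in> X \<longrightarrow> p3 = n)"
     "(0 \<in> Y \<longrightarrow> q1 = 1) \<and> (1 \<in> Y \<longrightarrow> q2 = q1 + 1) \<and> (2 \<in> Y \<longrightarrow> q3 = q2 + 1) \<and> (3 \<in> Y \<longrightarrow> q3 = n)" by blast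
  define P where "P a = (if a = 1 then p1 else if a = 2 then p2 else p3)" for a :: nat
  define Q where "Q a = (if a = 1 then q1 else if a = 2 then q2 else q3)" for a :: nat
  have "inc3 P n" "inc3 Q n" "adj X P n" "adj Y Q n" using H unfolding inc3_def adj_def P_def Q_def by simp_all
  moreover have "\<forall>a\<in>{1,2,3}. f (P a) = Q (nth1 [1,3,2] a)" using H unfolding P_def Q_def by auto
  ultimately show ?L unfolding Occ_def by blast
qed

lemma pf:
  assumes "f permutes {1..n}"
  shows "\<And>i. i \<in> {1..n} \<Longrightarrow> f i \<in> {1..n}" "\<And>i j. f i = f j \<Longrightarrow> i = j"
    "\<And>v. v \<in> {1..n} \<Longrightarrow> f (inv f v) = v" "\<And>v. v \<in> {1..n} \<Longrightarrow> inv f v \<in> {1..n}"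
  using assms perm_range apply blast
  using assms permutes_inj injD apply metis
  using assms permutes_inverses(1) apply metis
  using assms permutes_inv perm_range by blast

lemma pinv: "f x = v \<Longrightarrow> f permutes S \<Longrightarrow> x = inv f v"
  by (metis permutes_inv_eq)

lemma cnt_eq:
  assumes "\<And>f. f permutes {1..n} \<Longrightarrow> C f \<longleftrightarrow> D f"
  shows "card {f. f permutes {1..n} \<and> C f} = card {f. f permutes {1..n} \<and> D f}"
  using assms by (metis (mono_tags, lifting) Collect_cong)

lemma cntU1:
  assumes "finite K" "card K = n - 2" "\<And>x. x \<in> K \<Longrightarrow> okc n (cs x) \<and> length (cs x) = 2"
    "\<And>x y f. x \<in> K \<Longrightarrow> y \<in> K \<Longrightarrow> f permutes {1..n} \<Longrightarrow> sat (cs x) f \<Longrightarrow> sat (cs y) f \<Longrightarrow> x = y"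
    "\<And>f. f permutes {1..n} \<Longrightarrow> C f \<longleftrightarrow> (\<exists>x\<in>K. sat (cs x) f)"
  shows "card {f. f permutes {1..n} \<and> C f} = fact (n - 2) * (n - 2)"
  using cnt_eq[of n C, OF assms(5)] count_union[of K n cs 2, OF assms(1,3,4)] assms(2) by (simp add: numeral_2_eq_2)

lemma cntU2:
  assumes "finite K" "card K = (n - 2) * (n - 2)" "\<And>x. x \<in> K \<Longrightarrow> okc n (cs x) \<and> length (cs x) = 3"
    "\<And>x y f. x \<in> K \<Longrightarrow> y \<in> K \<Longrightarrow> f permutes {1..n} \<Longrightarrow> sat (cs x) f \<Longrightarrow> sat (cs y) f \<Longrightarrow> x = y"
    "\<And>f. f permutes {1..n} \<Longrightarrow> C f \<longleftrightarrow> (\<exists>x\<in>K. sat (cs x) f)"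
  shows "card {f. f permutes {1..n} \<and> C f} = fact (n - 2) * (n - 2)"
proof -
  have "card {f. f permutes {1..n} \<and> C f} = (n - 2) * (n - 2) * fact (n - 3)"
    using cnt_eq[of n C, OF assms(5)] count_union[of K n cs 3, OF assms(1,3,4)] assms(2) by simp
  also have "\<dots> = fact (n - 2) * (n - 2)"
  proof (cases "n \<ge> 3")
    case True
    then obtain k where k: "n = k + 3" by (metis le_add_diff_inverse2)
    show ?thesis unfolding k by (simp add: algebra_simps)
  next
    case False
    then have "n - 2 = 0" by simp
    then show ?thesis by simp
  qed
  finally show ?thesis .
qed

lemma card_pair: "card ({1..n-2} \<times> {2..n-1}) = (n - 2) * (n - 2)" "card ({1..n-2} \<times> {1..n-2}) = (n - 2) * (n - 2)"
proof -
  have "card {1..n-2} = n - 2" "card {2..n-1} = n - 2" by simp_all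
  then show "card ({1..n-2} \<times> {2..n-1}) = (n - 2) * (n - 2)" "card ({1..n-2} \<times> {1..n-2}) = (n - 2) * (n - 2)"
    by (simp_all add: card_cartesian_product)
qed

lemma sat_simps[simp]: "sat [] f" "sat ((i,v)#cs) f \<longleftrightarrow> f i = v \<and> sat cs f"
  by (auto simp: sat_def)

lemma pinj: "f permutes S \<Longrightarrow> f x = f y \<Longrightarrow> x = y"
  by (metis permutes_inj injD)

lemma c1: assumes "2 \<le> n" shows "card {f. f permutes {1..n} \<and> (f 1 = 1 \<and> f n \<noteq> 2)} = fact (n - 2) * (n - 2)"
  using count_A[of 1 n n 1 2] assms by simp
lemma c2: assumes "2 \<le> n" shows "card {f. f permutes {1..n} \<and> (f 1 = 1 \<and> f 2 \<noteq> n)} = fact (n - 2) * (n - 2)"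
  using count_A[of 1 n 2 1 n] assms by simp
lemma c5: assumes "2 \<le> n" shows "card {f. f permutes {1..n} \<and> (f 2 = n-1 \<and> f 1 \<noteq> n)} = fact (n - 2) * (n - 2)"
  using count_A[of 2 n 1 "n-1" n] assms by simp
lemma c9: assumes "2 \<le> n" shows "card {f. f permutes {1..n} \<and> (f 1 = 1 \<and> f 2 \<noteq> 2)} = fact (n - 2) * (n - 2)"
  using count_A[of 1 n 2 1 2] assms by simp
lemma c10: assumes "2 \<le> n" shows "card {f. f permutes {1..n} \<and> (f 1 = 1 \<and> f n \<noteq> n)} = fact (n - 2) * (n - 2)"
  using count_A[of 1 n n 1 n] assms by simp
lemma c13: assumes "2 \<le> n" shows "card {f. f permutes {1..n} \<and> (f 2 = n \<and> f 1 \<noteq> n-1)} = fact (n - 2) * (n - 2)"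
  using count_A[of 2 n 1 n "n-1"] assms by simp
lemma c18: assumes "2 \<le> n" shows "card {f. f permutes {1..n} \<and> (f n = n-1 \<and> f 1 \<noteq> n)} = fact (n - 2) * (n - 2)"
  using count_A[of n n 1 "n-1" n] assms by simp

lemma c3: assumes "2 \<le> n" shows "card {f. f permutes {1..n} \<and> (\<exists>i\<in>{1..n-2}. f i = 1 \<and> f (i+1) = 2)} = fact (n - 2) * (n - 2)"
  apply (rule cntU1[where K="{1..n-2}" and cs="\<lambda>i. [(i,1),(i+1,2)]"])
  subgoal by simp
  subgoal by simp
  subgoal by (auto simp: okc_def)
  subgoal for x y f by (simp; metis pinj)
  subgoal by auto
  done

lemma c4: assumes "2 \<le> n" shows "card {f. f permutes {1..n} \<and> (\<exists>a\<in>{1..n-2}. f 1 = a \<and> f 2 = a+1)} = fact (n - 2) * (n - 2)"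
  apply (rule cntU1[where K="{1..n-2}" and cs="\<lambda>a. [(1,a),(2,a+1)]"])
  subgoal by simp
  subgoal by simp
  subgoal by (auto simp: okc_def)
  subgoal for x y f by (simp; metis pinj)
  subgoal by auto
  done

lemma c8: assumes "2 \<le> n" shows "card {f. f permutes {1..n} \<and> (\<exists>i\<in>{1..n-2}. f i = 1 \<and> f (i+2) = n)} = fact (n - 2) * (n - 2)"
  apply (rule cntU1[where K="{1..n-2}" and cs="\<lambda>i. [(i,1),(i+2,n)]"])
  subgoal by simp
  subgoal by simp
  subgoal by (auto simp: okc_def)
  subgoal for x y f by (simp; metis pinj)
  subgoal by auto
  done

lemma c11: assumes "2 \<le> n" shows "card {f. f permutes {1..n} \<and> (\<exists>i\<in>{1..n-2}. f i = 1 \<and> f (i+1) = n)} = fact (n - 2) * (n - 2)"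
  apply (rule cntU1[where K="{1..n-2}" and cs="\<lambda>i. [(i,1),(i+1,n)]"])
  subgoal by simp
  subgoal by simp
  subgoal by (auto simp: okc_def)
  subgoal for x y f by (simp; metis pinj)
  subgoal by auto
  done

lemma c12: assumes "2 \<le> n" shows "card {f. f permutes {1..n} \<and> (\<exists>a\<in>{1..n-2}. f 1 = a \<and> f 2 = a+2)} = fact (n - 2) * (n - 2)"
  apply (rule cntU1[where K="{1..n-2}" and cs="\<lambda>a. [(1,a),(2,a+2)]"])
  subgoal by simp
  subgoal by simp
  subgoal by (auto simp: okc_def)
  subgoal for x y f by (simp; metis pinj)
  subgoal by auto
  done

lemma c14: assumes "2 \<le> n" shows "card {f. f permutes {1..n} \<and> (\<exists>i\<in>{2..n-1}. f i = n \<and> f (i+1) = n-1)} = fact (n - 2) * (n - 2)"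
  apply (rule cntU1[where K="{2..n-1}" and cs="\<lambda>i. [(i,n),(i+1,n-1)]"])
  subgoal by simp
  subgoal by simp
  subgoal by (auto simp: okc_def)
  subgoal for x y f by (simp; metis pinj)
  subgoal by auto
  done

lemma c19: assumes "2 \<le> n" shows "card {f. f permutes {1..n} \<and> (\<exists>a\<in>{1..n-2}. f 1 = a \<and> f n = a+1)} = fact (n - 2) * (n - 2)"
  apply (rule cntU1[where K="{1..n-2}" and cs="\<lambda>a. [(1,a),(n,a+1)]"])
  subgoal by simp
  subgoal by simp
  subgoal by (auto simp: okc_def)
  subgoal for x y f by (simp; metis pinj)
  subgoal by auto
  done

lemma c6: assumes "2 \<le> n" shows "card {f. f permutes {1..n} \<and> (\<exists>a\<in>{1..n-2}. \<exists>i\<in>{2..n-1}. f 1 = a \<and> f i = a+1 \<and> f (i+1) = a+2)} = fact (n - 2) * (n - 2)"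
  apply (rule cntU2[where K="{1..n-2} \<times> {2..n-1}" and cs="\<lambda>x. [(1,fst x),(snd x,fst x+1),(snd x+1,fst x+2)]"])
  subgoal by simp
  subgoal by (rule card_pair)
  subgoal by (auto simp: okc_def)
  subgoal for x y f by (simp add: prod_eq_iff) (metis pinj)
  subgoal by auto
  done

lemma c7: assumes "2 \<le> n" shows "card {f. f permutes {1..n} \<and> (\<exists>a\<in>{1..n-2}. \<exists>i\<in>{2..n-1}. f 1 = a \<and> f i = a+1 \<and> f (i+1) = n)} = fact (n - 2) * (n - 2)"
  apply (rule cntU2[where K="{1..n-2} \<times> {2..n-1}" and cs="\<lambda>x. [(1,fst x),(snd x,fst x+1),(snd x+1,n)]"])
  subgoal by simp
  subgoal by (rule card_pair)
  subgoal by (auto simp: okc_def)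
  subgoal for x y f by (simp add: prod_eq_iff) (metis pinj)
  subgoal by auto
  done

lemma c15: assumes "2 \<le> n" shows "card {f. f permutes {1..n} \<and> (\<exists>a\<in>{1..n-2}. \<exists>i\<in>{2..n-1}. f 1 = a \<and> f i = a+2 \<and> f (i+1) = a+1)} = fact (n - 2) * (n - 2)"
  apply (rule cntU2[where K="{1..n-2} \<times> {2..n-1}" and cs="\<lambda>x. [(1,fst x),(snd x,fst x+2),(snd x+1,fst x+1)]"])
  subgoal by simp
  subgoal by (rule card_pair)
  subgoal by (auto simp: okc_def)
  subgoal for x y f by (simp add: prod_eq_iff) (metis pinj)
  subgoal by auto
  done

lemma c16: assumes "2 \<le> n" shows "card {f. f permutes {1..n} \<and> (\<exists>a\<in>{1..n-2}. \<exists>i\<in>{2..n-1}. f 1 = a \<and> f i = n \<and> f (i+1) = a+1)} = fact (n - 2) * (n - 2)"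
  apply (rule cntU2[where K="{1..n-2} \<times> {2..n-1}" and cs="\<lambda>x. [(1,fst x),(snd x,n),(snd x+1,fst x+1)]"])
  subgoal by simp
  subgoal by (rule card_pair)
  subgoal by (auto simp: okc_def)
  subgoal for x y f by (simp add: prod_eq_iff) (metis pinj)
  subgoal by auto
  done

lemma c17: assumes "2 \<le> n" shows "card {f. f permutes {1..n} \<and> (\<exists>a\<in>{1..n-2}. \<exists>i\<in>{1..n-2}. f i = a \<and> f (i+1) = n \<and> f (i+2) = a+1)} = fact (n - 2) * (n - 2)"
  apply (rule cntU2[where K="{1..n-2} \<times> {1..n-2}" and cs="\<lambda>x. [(snd x,fst x),(snd x+1,n),(snd x+2,fst x+1)]"])
  subgoal by simp
  subgoal by (rule card_pair)
  subgoal by (auto simp: okc_def)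
  subgoal for x y f
    apply (cases x; cases y)
    apply (simp only: sat_simps prod.sel prod.inject)
    apply (metis pinj add_right_cancel)
    done
  subgoal by auto
  done

lemma c20: assumes "2 \<le> n" shows "card {f. f permutes {1..n} \<and> (\<exists>a\<in>{1..n-2}. \<exists>i\<in>{1..n-2}. f i = a \<and> f (i+1) = n \<and> f n = a+1)} = fact (n - 2) * (n - 2)"
  apply (rule cntU2[where K="{1..n-2} \<times> {1..n-2}" and cs="\<lambda>x. [(snd x,fst x),(snd x+1,n),(n,fst x+1)]"])
  subgoal by simp
  subgoal by (rule card_pair)
  subgoal by (auto simp: okc_def)
  subgoal for x y f by (simp add: prod_eq_iff) (metis pinj)
  subgoal by auto
  done

lemma bexI1: "x \<in> A \<and> P x \<Longrightarrow> \<exists>x\<in>A. P x" by blast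
lemma bexI2: "x \<in> A \<and> y \<in> B \<and> P x y \<Longrightarrow> \<exists>x\<in>A. \<exists>y\<in>B. P x y" by blast

lemma Fwd1: assumes f: "f permutes {1..n}" and n: "2 \<le> n" shows "Occ n f [1,2,3] {0} {0,1} \<Longrightarrow> f 1 = 1 \<and> f n \<noteq> 2"
  unfolding OccE_123 apply (elim exE conjE)
  apply (simp)?
  using pf[OF f] n by (metis linorder_not_le numeral_2_eq_2)

lemma Bwd1: assumes f: "f permutes {1..n}" and n: "2 \<le> n" shows "f 1 = 1 \<and> f n \<noteq> 2 \<Longrightarrow> Occ n f [1,2,3] {0} {0,1}"
  apply (elim conjE)
  apply (unfold OccE_123)
  apply (rule exI[of _ "1"], rule exI[of _ "inv f 2"], rule exI[of _ "n"], rule exI[of _ "1"], rule exI[of _ "2"], rule exI[of _ "f n"])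
  apply (simp)?
  using pf[OF f] n by (smt (verit, ccfv_threshold) Nat.diff_cancel Suc_1 add_diff_inverse_nat add_is_1 dual_order.eq_iff f less_add_eq_less less_trans_Suc linorder_not_less permutes_in_seg permutes_inverses(2) permutes_not_in plus_1_eq_Suc zero_neq_one)

lemma Fwd2: assumes f: "f permutes {1..n}" and n: "2 \<le> n" shows "Occ n f [1,2,3] {0} {0,3} \<Longrightarrow> f 1 = 1 \<and> f 2 \<noteq> n"
  unfolding OccE_123 apply (elim exE conjE)
  apply (simp)?
  using pf[OF f] n by (metis less_2_cases_iff less_nat_zero_code less_not_refl)

lemma Bwd2: assumes f: "f permutes {1..n}" and n: "2 \<le> n" shows "f 1 = 1 \<and> f 2 \<noteq> n \<Longrightarrow> Occ n f [1,2,3] {0} {0,3}"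
  apply (elim conjE)
  apply (unfold OccE_123)
  apply (rule exI[of _ "1"], rule exI[of _ "2"], rule exI[of _ "inv f n"], rule exI[of _ "1"], rule exI[of _ "f 2"], rule exI[of _ "n"])
  apply (simp)?
  using pf[OF f] n by (smt (verit, best) One_nat_def f leD less_2_cases_iff less_numeral_extra(1) linorder_less_linear order_class.order_eq_iff permutes_in_seg permutes_inv permutes_not_in)

lemma Fwd3: assumes f: "f permutes {1..n}" and n: "2 \<le> n" shows "Occ n f [1,2,3] {1} {0,1} \<Longrightarrow> \<exists>i\<in>{1..n-2}. f i = 1 \<and> f (i+1) = 2"
  unfolding OccE_123 apply (elim exE conjE)
  subgoal for p1 p2 p3 q1 q2 q3
  apply (rule bexI1[of "p1"])
  apply simp
  done
  done

lemma Bwd3: assumes f: "f permutes {1..n}" and n: "2 \<le> n" shows "\<exists>i\<in>{1..n-2}. f i = 1 \<and> f (i+1) = 2 \<Longrightarrow> Occ n f [1,2,3] {1} {0,1}"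
  apply (elim bexE conjE)
  subgoal for i
  apply (unfold OccE_123)
  apply (rule exI[of _ "i"], rule exI[of _ "i+1"], rule exI[of _ "n"], rule exI[of _ "1"], rule exI[of _ "2"], rule exI[of _ "f n"])
  apply (simp)?
  using pf[OF f] n by (smt (verit, best) Nat.add_diff_assoc Nat.diff_cancel Orderings.order_eq_iff Suc_1 add_diff_cancel_left' f interval_class.less_imp_less_eq_dec le_imp_less_Suc linorder_cases nless_le numerals(1) permutes_in_seg permutes_not_in plus_1_eq_Suc pred_numeral_def pred_numeral_simps(1))
  done

lemma Fwd4: assumes f: "f permutes {1..n}" and n: "2 \<le> n" shows "Occ n f [1,2,3] {0,1} {0,2} \<Longrightarrow> f 1 = 1 \<and> f 2 \<noteq> n"
  unfolding OccE_123 apply (elim exE conjE)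
  apply (simp)?
  using pf[OF f] n by (metis One_nat_def Suc_1 Suc_n_not_le_n)

lemma Bwd4: assumes f: "f permutes {1..n}" and n: "2 \<le> n" shows "f 1 = 1 \<and> f 2 \<noteq> n \<Longrightarrow> Occ n f [1,2,3] {0,1} {0,2}"
proof -
  assume a: "f 1 = 1 \<and> f 2 \<noteq> n"
  note F = pf[OF f]
  have f2: "f 2 \<in> {1..n}" using F(1) n by auto
  have f2ne1: "f 2 \<noteq> 1" using a F(2)[of 2 1] by auto
  define j where "j = inv f (f 2 + 1)"
  have v: "f 2 + 1 \<in> {1..n}" using f2 a by auto
  have fj: "f j = f 2 + 1" and jr: "j \<in> {1..n}" using F(3,4)[OF v] unfolding j_def by auto
  have j1: "j \<noteq> 1" using fj a f2 by auto
  have j2: "j \<noteq> 2" using fj by auto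
  show ?thesis unfolding OccE_123
    apply (rule exI[of _ 1], rule exI[of _ 2], rule exI[of _ j], rule exI[of _ 1], rule exI[of _ "f 2"], rule exI[of _ "f 2 + 1"])
    using a f2 f2ne1 fj jr j1 j2 n v by auto
qed

lemma Fwd5: assumes f: "f permutes {1..n}" and n: "2 \<le> n" shows "Occ n f [1,2,3] {0,1} {1,2} \<Longrightarrow> \<exists>a\<in>{1..n-2}. f 1 = a \<and> f 2 = a+1"
  unfolding OccE_123 apply (elim exE conjE)
  subgoal for p1 p2 p3 q1 q2 q3
  apply (rule bexI1[of "q1"])
  apply (simp)?
  using pf[OF f] n by (metis add_2_eq_Suc' numeral_2_eq_2 ordered_cancel_comm_monoid_diff_class.le_diff_conv2)
  done

lemma Bwd5: assumes f: "f permutes {1..n}" and n: "2 \<le> n" shows "\<exists>a\<in>{1..n-2}. f 1 = a \<and> f 2 = a+1 \<Longrightarrow> Occ n f [1,2,3] {0,1} {1,2}"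
  apply (elim bexE conjE)
  subgoal for a
  apply (unfold OccE_123)
  apply (rule exI[of _ "1"], rule exI[of _ "2"], rule exI[of _ "inv f (a+2)"], rule exI[of _ "a"], rule exI[of _ "a+1"], rule exI[of _ "a+2"])
  apply (simp)?
  using pf[OF f] n by (smt (verit) Nat.le_diff_conv2 One_nat_def Suc_1 add_2_eq_Suc' antisym diff_add_inverse2 f interval_class.less_imp_less_eq_dec le_SucI linorder_le_cases linorder_neq_iff n_not_Suc_n permutes_in_seg permutes_inv_eq permutes_not_in plus_1_eq_Suc)
  done

lemma Fwd6: assumes f: "f permutes {1..n}" and n: "2 \<le> n" shows "Occ n f [1,2,3] {0,1} {0,3} \<Longrightarrow> f 1 = 1 \<and> f 2 \<noteq> n"
  unfolding OccE_123 apply (elim exE conjE)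
  apply (simp)?
  using pf[OF f] n by (metis One_nat_def Suc_1 less_not_refl)

lemma Bwd6: assumes f: "f permutes {1..n}" and n: "2 \<le> n" shows "f 1 = 1 \<and> f 2 \<noteq> n \<Longrightarrow> Occ n f [1,2,3] {0,1} {0,3}"
  apply (elim conjE)
  apply (unfold OccE_123)
  apply (rule exI[of _ "1"], rule exI[of _ "2"], rule exI[of _ "inv f n"], rule exI[of _ "1"], rule exI[of _ "f 2"], rule exI[of _ "n"])
  apply (simp)?
  using pf[OF f] n by (smt (verit, best) Orderings.order_eq_iff f less_2_cases numeral_le_one_iff permutes_in_seg permutes_inverses(1) permutes_not_in semiring_norm(69) verit_comp_simplify1(3) zero_less_one)

lemma Fwd7: assumes f: "f permutes {1..n}" and n: "2 \<le> n" shows "Occ n f [1,2,3] {0,1} {1,3} \<Longrightarrow> \<exists>a\<in>{1..n-2}. f 1 = a \<and> f 2 = a+1"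
  unfolding OccE_123 apply (elim exE conjE)
  subgoal for p1 p2 p3 q1 q2 q3
  apply (rule bexI1[of "q1"])
  apply (simp)?
  using pf[OF f] n by (metis One_nat_def Suc_1 diff_Suc_eq_diff_pred interval_class.less_imp_less_eq_dec less_eq_Suc_le)
  done

lemma Bwd7: assumes f: "f permutes {1..n}" and n: "2 \<le> n" shows "\<exists>a\<in>{1..n-2}. f 1 = a \<and> f 2 = a+1 \<Longrightarrow> Occ n f [1,2,3] {0,1} {1,3}"
  apply (elim bexE conjE)
  subgoal for a
  apply (unfold OccE_123)
  apply (rule exI[of _ "1"], rule exI[of _ "2"], rule exI[of _ "inv f n"], rule exI[of _ "a"], rule exI[of _ "a+1"], rule exI[of _ "n"])
  apply (simp)?
  using pf[OF f] n by (smt (verit) Nat.add_0_right Suc_1 diff_Suc_1 diff_Suc_diff_eq2 f le_eq_less_or_eq less_Suc_eq_le linorder_cases order.strict_trans1 order_less_le permutes_in_seg permutes_inv permutes_not_in plus_1_eq_Suc)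
  done

lemma Fwd8: assumes f: "f permutes {1..n}" and n: "2 \<le> n" shows "Occ n f [1,2,3] {0,1} {2,3} \<Longrightarrow> f 2 = n-1 \<and> f 1 \<noteq> n"
  unfolding OccE_123 apply (elim exE conjE)
  apply (simp)?
  using pf[OF f] n using One_nat_def Suc_1 by argo

lemma Bwd8: assumes f: "f permutes {1..n}" and n: "2 \<le> n" shows "f 2 = n-1 \<and> f 1 \<noteq> n \<Longrightarrow> Occ n f [1,2,3] {0,1} {2,3}"
  apply (elim conjE)
  apply (unfold OccE_123)
  apply (rule exI[of _ "1"], rule exI[of _ "2"], rule exI[of _ "inv f n"], rule exI[of _ "f 1"], rule exI[of _ "n-1"], rule exI[of _ "n"])
  apply (simp)?
  using pf[OF f] n by (smt (verit, ccfv_SIG) Suc_1 Suc_pred f less_2_cases less_Suc_eq_le less_numeral_extra(1) linorder_less_linear n_not_Suc_n nless_le permutes_in_seg permutes_inv permutes_not_in)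

lemma Fwd9: assumes f: "f permutes {1..n}" and n: "2 \<le> n" shows "Occ n f [1,2,3] {0,2} {1,2} \<Longrightarrow> \<exists>a\<in>{1..n-2}. \<exists>i\<in>{2..n-1}. f 1 = a \<and> f i = a+1 \<and> f (i+1) = a+2"
  unfolding OccE_123 apply (elim exE conjE)
  subgoal for p1 p2 p3 q1 q2 q3
  apply (rule bexI2[of "q1" _ "p2"])
  apply (simp)?
  using pf[OF f] n by (metis Nat.le_diff_conv2 Suc_le_mono add_2_eq_Suc' add_diff_inverse_nat not_numeral_less_one numeral_1_eq_Suc_0 numeral_One order_le_less_trans plus_1_eq_Suc)
  done

lemma Bwd9: assumes f: "f permutes {1..n}" and n: "2 \<le> n" shows "\<exists>a\<in>{1..n-2}. \<exists>i\<in>{2..n-1}. f 1 = a \<and> f i = a+1 \<and> f (i+1) = a+2 \<Longrightarrow> Occ n f [1,2,3] {0,2} {1,2}"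
  apply (elim bexE conjE)
  subgoal for a i
  apply (unfold OccE_123)
  apply (rule exI[of _ "1"], rule exI[of _ "i"], rule exI[of _ "i+1"], rule exI[of _ "a"], rule exI[of _ "a+1"], rule exI[of _ "a+2"])
  apply (simp)?
  using pf[OF f] n by linarith
  done

lemma Fwd10: assumes f: "f permutes {1..n}" and n: "2 \<le> n" shows "Occ n f [1,2,3] {0,2} {0,3} \<Longrightarrow> f 1 = 1 \<and> f 2 \<noteq> n"
  unfolding OccE_123 apply (elim exE conjE)
  apply (simp)?
  using pf[OF f] n by (metis One_nat_def Suc_1 Suc_leI Suc_n_not_le_n)

lemma Bwd10: assumes f: "f permutes {1..n}" and n: "2 \<le> n" shows "f 1 = 1 \<and> f 2 \<noteq> n \<Longrightarrow> Occ n f [1,2,3] {0,2} {0,3}"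
  apply (elim conjE)
  apply (unfold OccE_123)
  apply (rule exI[of _ "1"], rule exI[of _ "inv f n - 1"], rule exI[of _ "inv f n"], rule exI[of _ "1"], rule exI[of _ "f (inv f n - 1)"], rule exI[of _ "n"])
  apply (simp)?
  using pf[OF f] n by (smt (verit, best) Nat.le_imp_diff_is_add Suc_1 add.commute diff_less_Suc f le_neq_implies_less less_or_eq_imp_le not_less_less_Suc_eq order_less_asym' order_less_trans permutes_in_seg permutes_inv permutes_not_in plus_1_eq_Suc zero_less_one)

lemma Fwd11: assumes f: "f permutes {1..n}" and n: "2 \<le> n" shows "Occ n f [1,2,3] {0,2} {1,3} \<Longrightarrow> \<exists>a\<in>{1..n-2}. \<exists>i\<in>{2..n-1}. f 1 = a \<and> f i = a+1 \<and> f (i+1) = n"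
  unfolding OccE_123 apply (elim exE conjE)
  subgoal for p1 p2 p3 q1 q2 q3
  apply (rule bexI2[of "q1" _ "p2"])
  apply (simp)?
  using pf[OF f] n by (metis One_nat_def Suc_1 Suc_diff_Suc Suc_le_mono interval_class.less_imp_less_eq_dec less_eq_Suc_le)
  done

lemma Bwd11: assumes f: "f permutes {1..n}" and n: "2 \<le> n" shows "\<exists>a\<in>{1..n-2}. \<exists>i\<in>{2..n-1}. f 1 = a \<and> f i = a+1 \<and> f (i+1) = n \<Longrightarrow> Occ n f [1,2,3] {0,2} {1,3}"
  apply (elim bexE conjE)
  subgoal for a i
  apply (unfold OccE_123)
  apply (rule exI[of _ "1"], rule exI[of _ "i"], rule exI[of _ "i+1"], rule exI[of _ "a"], rule exI[of _ "a+1"], rule exI[of _ "n"])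
  apply (simp)?
  using pf[OF f] n by linarith
  done

lemma Fwd12: assumes f: "f permutes {1..n}" and n: "2 \<le> n" shows "Occ n f [1,2,3] {1,2} {0,3} \<Longrightarrow> \<exists>i\<in>{1..n-2}. f i = 1 \<and> f (i+2) = n"
  unfolding OccE_123 apply (elim exE conjE)
  subgoal for p1 p2 p3 q1 q2 q3
  apply (rule bexI1[of "p1"])
  apply simp
  done
  done

lemma Bwd12: assumes f: "f permutes {1..n}" and n: "2 \<le> n" shows "\<exists>i\<in>{1..n-2}. f i = 1 \<and> f (i+2) = n \<Longrightarrow> Occ n f [1,2,3] {1,2} {0,3}"
  apply (elim bexE conjE)
  subgoal for i
  apply (unfold OccE_123)
  apply (rule exI[of _ "i"], rule exI[of _ "i+1"], rule exI[of _ "i+2"], rule exI[of _ "1"], rule exI[of _ "f (i+1)"], rule exI[of _ "n"])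
  apply (simp)?
  using pf[OF f] n by (smt (verit, del_insts) One_nat_def f le_Suc_eq not_less_eq_eq order_le_imp_less_or_eq permutes_in_seg permutes_not_in)
  done

lemma Fwd13: assumes f: "f permutes {1..n}" and n: "2 \<le> n" shows "Occ n f [1,3,2] {0} {0,1} \<Longrightarrow> f 1 = 1 \<and> f 2 \<noteq> 2"
  unfolding OccE_132 apply (elim exE conjE)
  apply (simp)?
  using pf[OF f] n by (metis One_nat_def Suc_1 not_less_eq)

lemma Bwd13: assumes f: "f permutes {1..n}" and n: "2 \<le> n" shows "f 1 = 1 \<and> f 2 \<noteq> 2 \<Longrightarrow> Occ n f [1,3,2] {0} {0,1}"
  apply (elim conjE)
  apply (unfold OccE_132)
  apply (rule exI[of _ "1"], rule exI[of _ "2"], rule exI[of _ "inv f 2"], rule exI[of _ "1"], rule exI[of _ "2"], rule exI[of _ "f 2"])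
  apply (simp)?
  using pf[OF f] n by (smt (verit, ccfv_SIG) f less_2_cases_iff linorder_neq_iff not_one_le_zero permutes_in_seg permutes_not_in)

lemma Fwd14: assumes f: "f permutes {1..n}" and n: "2 \<le> n" shows "Occ n f [1,3,2] {0} {0,3} \<Longrightarrow> f 1 = 1 \<and> f n \<noteq> n"
  unfolding OccE_132 apply (elim exE conjE)
  apply (simp)?
  using pf[OF f] n by (metis verit_comp_simplify1(3))

lemma Bwd14: assumes f: "f permutes {1..n}" and n: "2 \<le> n" shows "f 1 = 1 \<and> f n \<noteq> n \<Longrightarrow> Occ n f [1,3,2] {0} {0,3}"
  apply (elim conjE)
  apply (unfold OccE_132)
  apply (rule exI[of _ "1"], rule exI[of _ "inv f n"], rule exI[of _ "n"], rule exI[of _ "1"], rule exI[of _ "f n"], rule exI[of _ "n"])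
  apply (simp)?
  using pf[OF f] n by (smt (verit, ccfv_SIG) One_nat_def f order_le_imp_less_or_eq permutes_in_seg permutes_not_in)

lemma Fwd15: assumes f: "f permutes {1..n}" and n: "2 \<le> n" shows "Occ n f [1,3,2] {1} {0,3} \<Longrightarrow> \<exists>i\<in>{1..n-2}. f i = 1 \<and> f (i+1) = n"
  unfolding OccE_132 apply (elim exE conjE)
  subgoal for p1 p2 p3 q1 q2 q3
  apply (rule bexI1[of "p1"])
  apply simp
  done
  done

lemma Bwd15: assumes f: "f permutes {1..n}" and n: "2 \<le> n" shows "\<exists>i\<in>{1..n-2}. f i = 1 \<and> f (i+1) = n \<Longrightarrow> Occ n f [1,3,2] {1} {0,3}"
  apply (elim bexE conjE)
  subgoal for i
  apply (unfold OccE_132)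
  apply (rule exI[of _ "i"], rule exI[of _ "i+1"], rule exI[of _ "n"], rule exI[of _ "1"], rule exI[of _ "f n"], rule exI[of _ "n"])
  apply (simp)?
  using pf[OF f] n by (smt (verit, ccfv_threshold) Nat.diff_add_assoc One_nat_def Suc_1 Suc_diff_eq_diff_pred diff_add_inverse f leD nat_neq_iff not_add_less2 permutes_in_seg permutes_not_in plus_1_eq_Suc pos2)
  done

lemma Fwd16: assumes f: "f permutes {1..n}" and n: "2 \<le> n" shows "Occ n f [1,3,2] {0,1} {0,1} \<Longrightarrow> f 1 = 1 \<and> f 2 \<noteq> 2"
  unfolding OccE_132 apply (elim exE conjE)
  apply (simp)?
  using pf[OF f] n by (metis One_nat_def Suc_1 less_numeral_extra(4) nat_add_left_cancel_less plus_1_eq_Suc)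

lemma Bwd16: assumes f: "f permutes {1..n}" and n: "2 \<le> n" shows "f 1 = 1 \<and> f 2 \<noteq> 2 \<Longrightarrow> Occ n f [1,3,2] {0,1} {0,1}"
  apply (elim conjE)
  apply (unfold OccE_132)
  apply (rule exI[of _ "1"], rule exI[of _ "2"], rule exI[of _ "inv f 2"], rule exI[of _ "1"], rule exI[of _ "2"], rule exI[of _ "f 2"])
  apply (simp)?
  using pf[OF f] n by (smt (verit, ccfv_SIG) f less_2_cases_iff linorder_neq_iff not_one_le_zero permutes_in_seg permutes_not_in)

lemma Fwd17: assumes f: "f permutes {1..n}" and n: "2 \<le> n" shows "Occ n f [1,3,2] {0,1} {0,2} \<Longrightarrow> f 1 = 1 \<and> f 2 \<noteq> 2"
  unfolding OccE_132 apply (elim exE conjE)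
  apply (simp)?
  using pf[OF f] n by (metis One_nat_def Suc_1 less_add_eq_less less_numeral_extra(4) plus_1_eq_Suc)

lemma Bwd17: assumes f: "f permutes {1..n}" and n: "2 \<le> n" shows "f 1 = 1 \<and> f 2 \<noteq> 2 \<Longrightarrow> Occ n f [1,3,2] {0,1} {0,2}"
  apply (elim conjE)
  apply (unfold OccE_132)
  apply (rule exI[of _ "1"], rule exI[of _ "2"], rule exI[of _ "inv f (f 2 - 1)"], rule exI[of _ "1"], rule exI[of _ "f 2 - 1"], rule exI[of _ "f 2"])
  apply (simp)?
  using pf[OF f] n by (smt (verit) Nat.add_diff_assoc Suc_diff_eq_diff_pred antisym_conv2 diff_le_self f interval_class.less_imp_less_eq_dec le_SucE le_add1 less_2_cases_iff less_add_same_cancel2 less_numeral_extra(1) linorder_neqE_nat minus_nat.diff_0 not_one_le_zero numerals(1) order.trans permutes_in_image permutes_in_seg permutes_inv permutes_not_in plus_1_eq_Suc)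

lemma Fwd18: assumes f: "f permutes {1..n}" and n: "2 \<le> n" shows "Occ n f [1,3,2] {0,1} {1,2} \<Longrightarrow> \<exists>a\<in>{1..n-2}. f 1 = a \<and> f 2 = a+2"
  unfolding OccE_132 apply (elim exE conjE)
  subgoal for p1 p2 p3 q1 q2 q3
  apply (rule bexI1[of "q1"])
  apply (simp)?
  using pf[OF f] n by (metis Nat.diff_cancel One_nat_def Suc_1 add_diff_cancel_left' diff_le_mono plus_1_eq_Suc)
  done

lemma Bwd18: assumes f: "f permutes {1..n}" and n: "2 \<le> n" shows "\<exists>a\<in>{1..n-2}. f 1 = a \<and> f 2 = a+2 \<Longrightarrow> Occ n f [1,3,2] {0,1} {1,2}"
  apply (elim bexE conjE)
  subgoal for a
  apply (unfold OccE_132)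
  apply (rule exI[of _ "1"], rule exI[of _ "2"], rule exI[of _ "inv f (a+1)"], rule exI[of _ "a"], rule exI[of _ "a+1"], rule exI[of _ "a+2"])
  apply (simp)?
  using pf[OF f] n by (smt (verit, ccfv_SIG) Nat.diff_add_assoc2 Nat.le_diff_conv2 Suc_1 Suc_eq_plus1 f interval_class.less_imp_less_eq_dec le_numeral_extra(4) linorder_cases linorder_linear not_less_eq_eq numeral_One order_antisym permutes_in_seg permutes_inv_eq permutes_not_in plus_1_eq_Suc pred_numeral_def pred_numeral_simps(1))
  done

lemma Fwd19: assumes f: "f permutes {1..n}" and n: "2 \<le> n" shows "Occ n f [1,3,2] {0,1} {3} \<Longrightarrow> f 2 = n \<and> f 1 \<noteq> n-1"
  unfolding OccE_132 apply (elim exE conjE)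
  apply (simp)?
  using pf[OF f] n by (metis One_nat_def Suc_1 interval_class.less_imp_less_eq_dec linorder_not_less)

lemma Bwd19: assumes f: "f permutes {1..n}" and n: "2 \<le> n" shows "f 2 = n \<and> f 1 \<noteq> n-1 \<Longrightarrow> Occ n f [1,3,2] {0,1} {3}"
  apply (elim conjE)
  apply (unfold OccE_132)
  apply (rule exI[of _ "1"], rule exI[of _ "2"], rule exI[of _ "inv f (n-1)"], rule exI[of _ "f 1"], rule exI[of _ "n-1"], rule exI[of _ "n"])
  apply (simp)?
  using pf[OF f] n by (smt (verit) Suc_1 Suc_pred antisym_conv2 diff_le_self f less_2_cases less_Suc_eq_le linorder_not_less not_one_le_zero permutes_in_seg permutes_inverses(1) permutes_not_in)

lemma Fwd20: assumes f: "f permutes {1..n}" and n: "2 \<le> n" shows "Occ n f [1,3,2] {0,1} {1,3} \<Longrightarrow> f 2 = n \<and> f 1 \<noteq> n-1"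
  unfolding OccE_132 apply (elim exE conjE)
  apply (simp)?
  using pf[OF f] n by (metis One_nat_def Suc_1 Suc_n_not_le_n interval_class.less_imp_less_eq_dec)

lemma Bwd20: assumes f: "f permutes {1..n}" and n: "2 \<le> n" shows "f 2 = n \<and> f 1 \<noteq> n-1 \<Longrightarrow> Occ n f [1,3,2] {0,1} {1,3}"
  apply (elim conjE)
  apply (unfold OccE_132)
  apply (rule exI[of _ "1"], rule exI[of _ "2"], rule exI[of _ "inv f (f 1 + 1)"], rule exI[of _ "f 1"], rule exI[of _ "f 1 + 1"], rule exI[of _ "n"])
  apply (simp)?
  using pf[OF f] n by (smt (verit, best) One_nat_def Suc_1 diff_Suc_1' f less_Suc_eq_le linorder_less_linear linorder_not_less nless_le not_less_eq permutes_in_seg permutes_inverses(1) permutes_not_in)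

lemma Fwd21: assumes f: "f permutes {1..n}" and n: "2 \<le> n" shows "Occ n f [1,3,2] {0,1} {2,3} \<Longrightarrow> f 2 = n \<and> f 1 \<noteq> n-1"
  unfolding OccE_132 apply (elim exE conjE)
  apply (simp)?
  using pf[OF f] n using One_nat_def Suc_1 by argo

lemma Bwd21: assumes f: "f permutes {1..n}" and n: "2 \<le> n" shows "f 2 = n \<and> f 1 \<noteq> n-1 \<Longrightarrow> Occ n f [1,3,2] {0,1} {2,3}"
proof -
  assume a: "f 2 = n \<and> f 1 \<noteq> n-1"
  note F = pf[OF f]
  define g where "g = inv f (n-1)"
  have fg: "f g = n-1" and gr: "g \<in> {1..n}" using F(3,4)[of "n-1"] n unfolding g_def by auto
  have g2: "g \<noteq> 2" using fg a n by auto
  have g1: "g \<noteq> 1" using fg a by auto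
  have f1: "f 1 \<in> {1..n}" using F(1) n by auto
  have f1n: "f 1 \<noteq> n" using a F(2)[of 1 2] by auto
  show ?thesis unfolding OccE_132
    apply (rule exI[of _ 1], rule exI[of _ 2], rule exI[of _ g], rule exI[of _ "f 1"], rule exI[of _ "n-1"], rule exI[of _ n])
    using a fg gr g1 g2 f1 f1n n by auto
qed

lemma Fwd22: assumes f: "f permutes {1..n}" and n: "2 \<le> n" shows "Occ n f [1,3,2] {2} {2,3} \<Longrightarrow> \<exists>i\<in>{2..n-1}. f i = n \<and> f (i+1) = n-1"
  unfolding OccE_132 apply (elim exE conjE)
  subgoal for p1 p2 p3 q1 q2 q3
  apply (rule bexI1[of "p2"])
  apply simp
  done
  done

lemma Bwd22: assumes f: "f permutes {1..n}" and n: "2 \<le> n" shows "\<exists>i\<in>{2..n-1}. f i = n \<and> f (i+1) = n-1 \<Longrightarrow> Occ n f [1,3,2] {2} {2,3}"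
  apply (elim bexE conjE)
  subgoal for i
  apply (unfold OccE_132)
  apply (rule exI[of _ "1"], rule exI[of _ "i"], rule exI[of _ "i+1"], rule exI[of _ "f 1"], rule exI[of _ "n-1"], rule exI[of _ "n"])
  apply (simp)?
  using pf[OF f] n by (smt (verit, best) Suc_1 Suc_pred f less_2_cases_iff less_eq_Suc_le nless_le not_less_eq_eq permutes_in_seg permutes_not_in)
  done

lemma Fwd23: assumes f: "f permutes {1..n}" and n: "2 \<le> n" shows "Occ n f [1,3,2] {0,2} {1,2} \<Longrightarrow> \<exists>a\<in>{1..n-2}. \<exists>i\<in>{2..n-1}. f 1 = a \<and> f i = a+2 \<and> f (i+1) = a+1"
  unfolding OccE_132 apply (elim exE conjE)
  subgoal for p1 p2 p3 q1 q2 q3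
  apply (rule bexI2[of "q1" _ "p2"])
  apply (simp)?
  using pf[OF f] n by (metis Suc_le_D Suc_le_mono add_2_eq_Suc' diff_Suc_1' ordered_cancel_comm_monoid_diff_class.le_diff_conv2)
  done

lemma Bwd23: assumes f: "f permutes {1..n}" and n: "2 \<le> n" shows "\<exists>a\<in>{1..n-2}. \<exists>i\<in>{2..n-1}. f 1 = a \<and> f i = a+2 \<and> f (i+1) = a+1 \<Longrightarrow> Occ n f [1,3,2] {0,2} {1,2}"
  apply (elim bexE conjE)
  subgoal for a i
  apply (unfold OccE_132)
  apply (rule exI[of _ "1"], rule exI[of _ "i"], rule exI[of _ "i+1"], rule exI[of _ "a"], rule exI[of _ "a+1"], rule exI[of _ "a+2"])
  apply (simp)?
  using pf[OF f] n by linarith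
  done

lemma Fwd24: assumes f: "f permutes {1..n}" and n: "2 \<le> n" shows "Occ n f [1,3,2] {0,2} {0,3} \<Longrightarrow> f 1 = 1 \<and> f n \<noteq> n"
  unfolding OccE_132 apply (elim exE conjE)
  apply (simp)?
  using pf[OF f] n by (metis Suc_n_not_le_n)

lemma Bwd24: assumes f: "f permutes {1..n}" and n: "2 \<le> n" shows "f 1 = 1 \<and> f n \<noteq> n \<Longrightarrow> Occ n f [1,3,2] {0,2} {0,3}"
proof -
  assume a: "f 1 = 1 \<and> f n \<noteq> n"
  note F = pf[OF f]
  define g where "g = inv f n"
  have fg: "f g = n" and gr: "g \<in> {1..n}" using F(3,4)[of n] n unfolding g_def by auto
  have g1: "g \<noteq> 1" using fg a n by auto
  have gn: "g \<noteq> n" using fg a by auto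
  have jr: "g + 1 \<in> {1..n}" using gr gn by auto
  have fj: "f (g + 1) \<in> {1..n}" using F(1)[OF jr] .
  have fj1: "f (g + 1) \<noteq> 1" using a F(2)[of "g+1" 1] gr by auto
  have fjn: "f (g + 1) \<noteq> n" using fg F(2)[of "g+1" g] by auto
  show ?thesis unfolding OccE_132
    apply (rule exI[of _ 1], rule exI[of _ g], rule exI[of _ "g+1"], rule exI[of _ 1], rule exI[of _ "f (g+1)"], rule exI[of _ n])
    using a fg gr g1 gn jr fj fj1 fjn n by auto
qed

lemma Fwd25: assumes f: "f permutes {1..n}" and n: "2 \<le> n" shows "Occ n f [1,3,2] {0,2} {1,3} \<Longrightarrow> \<exists>a\<in>{1..n-2}. \<exists>i\<in>{2..n-1}. f 1 = a \<and> f i = n \<and> f (i+1) = a+1"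
  unfolding OccE_132 apply (elim exE conjE)
  subgoal for p1 p2 p3 q1 q2 q3
  apply (rule bexI2[of "q1" _ "p2"])
  apply (simp)?
  using pf[OF f] n by (metis One_nat_def Suc_1 Suc_diff_Suc Suc_le_mono interval_class.less_imp_less_eq_dec less_eq_Suc_le)
  done

lemma Bwd25: assumes f: "f permutes {1..n}" and n: "2 \<le> n" shows "\<exists>a\<in>{1..n-2}. \<exists>i\<in>{2..n-1}. f 1 = a \<and> f i = n \<and> f (i+1) = a+1 \<Longrightarrow> Occ n f [1,3,2] {0,2} {1,3}"
  apply (elim bexE conjE)
  subgoal for a i
  apply (unfold OccE_132)
  apply (rule exI[of _ "1"], rule exI[of _ "i"], rule exI[of _ "i+1"], rule exI[of _ "a"], rule exI[of _ "a+1"], rule exI[of _ "n"])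
  apply (simp)?
  using pf[OF f] n by linarith
  done

lemma Fwd26: assumes f: "f permutes {1..n}" and n: "2 \<le> n" shows "Occ n f [1,3,2] {0,2} {2,3} \<Longrightarrow> \<exists>i\<in>{2..n-1}. f i = n \<and> f (i+1) = n-1"
  unfolding OccE_132 apply (elim exE conjE)
  subgoal for p1 p2 p3 q1 q2 q3
  apply (rule bexI1[of "p2"])
  apply simp
  done
  done

lemma Bwd26: assumes f: "f permutes {1..n}" and n: "2 \<le> n" shows "\<exists>i\<in>{2..n-1}. f i = n \<and> f (i+1) = n-1 \<Longrightarrow> Occ n f [1,3,2] {0,2} {2,3}"
  apply (elim bexE conjE)
  subgoal for i
  apply (unfold OccE_132)
  apply (rule exI[of _ "1"], rule exI[of _ "i"], rule exI[of _ "i+1"], rule exI[of _ "f 1"], rule exI[of _ "n-1"], rule exI[of _ "n"])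
  apply (simp)?
  using pf[OF f] n by (smt (verit, ccfv_SIG) Suc_1 atLeastAtMost_iff diff_Suc_Suc diff_Suc_eq_diff_pred diff_diff_cancel diff_is_0_eq less_eq_Suc_le less_or_eq_imp_le linorder_le_less_linear)
  done

lemma Fwd27: assumes f: "f permutes {1..n}" and n: "2 \<le> n" shows "Occ n f [1,3,2] {1,2} {0,3} \<Longrightarrow> \<exists>i\<in>{1..n-2}. f i = 1 \<and> f (i+1) = n"
  unfolding OccE_132 apply (elim exE conjE)
  subgoal for p1 p2 p3 q1 q2 q3
  apply (rule bexI1[of "p1"])
  apply simp
  done
  done

lemma Bwd27: assumes f: "f permutes {1..n}" and n: "2 \<le> n" shows "\<exists>i\<in>{1..n-2}. f i = 1 \<and> f (i+1) = n \<Longrightarrow> Occ n f [1,3,2] {1,2} {0,3}"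
  apply (elim bexE conjE)
  subgoal for i
  apply (unfold OccE_132)
  apply (rule exI[of _ "i"], rule exI[of _ "i+1"], rule exI[of _ "i+2"], rule exI[of _ "1"], rule exI[of _ "f (i+2)"], rule exI[of _ "n"])
  apply (simp)?
  using pf[OF f] n by (smt (verit, best) Nat.le_diff_conv2 One_nat_def Suc_1 Suc_eq_plus1 Suc_n_not_le_n add_Suc_shift f le_Suc_eq nat_less_le permutes_in_seg permutes_not_in)
  done

lemma Fwd28: assumes f: "f permutes {1..n}" and n: "2 \<le> n" shows "Occ n f [1,3,2] {1,2} {1,3} \<Longrightarrow> \<exists>a\<in>{1..n-2}. \<exists>i\<in>{1..n-2}. f i = a \<and> f (i+1) = n \<and> f (i+2) = a+1"
  unfolding OccE_132 apply (elim exE conjE)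
  subgoal for p1 p2 p3 q1 q2 q3
  apply (rule bexI2[of "q1" _ "p1"])
  apply (simp)?
  using pf[OF f] n by linarith
  done

lemma Bwd28: assumes f: "f permutes {1..n}" and n: "2 \<le> n" shows "\<exists>a\<in>{1..n-2}. \<exists>i\<in>{1..n-2}. f i = a \<and> f (i+1) = n \<and> f (i+2) = a+1 \<Longrightarrow> Occ n f [1,3,2] {1,2} {1,3}"
  apply (elim bexE conjE)
  subgoal for a i
  apply (unfold OccE_132)
  apply (rule exI[of _ "i"], rule exI[of _ "i+1"], rule exI[of _ "i+2"], rule exI[of _ "a"], rule exI[of _ "a+1"], rule exI[of _ "n"])
  apply (simp)?
  using pf[OF f] n by linarith
  done

lemma Fwd29: assumes f: "f permutes {1..n}" and n: "2 \<le> n" shows "Occ n f [1,3,2] {1,2} {2,3} \<Longrightarrow> \<exists>i\<in>{2..n-1}. f i = n \<and> f (i+1) = n-1"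
  unfolding OccE_132 apply (elim exE conjE)
  subgoal for p1 p2 p3 q1 q2 q3
  apply (rule bexI1[of "p2"])
  apply simp
  done
  done

lemma Bwd29: assumes f: "f permutes {1..n}" and n: "2 \<le> n" shows "\<exists>i\<in>{2..n-1}. f i = n \<and> f (i+1) = n-1 \<Longrightarrow> Occ n f [1,3,2] {1,2} {2,3}"
  apply (elim bexE conjE)
  subgoal for i
  apply (unfold OccE_132)
  apply (rule exI[of _ "i-1"], rule exI[of _ "i"], rule exI[of _ "i+1"], rule exI[of _ "f (i-1)"], rule exI[of _ "n-1"], rule exI[of _ "n"])
  apply (simp)?
  using pf[OF f] n by (smt (verit, ccfv_SIG) One_nat_def add_diff_inverse_nat antisym_conv2 diff_le_self f less_2_cases_iff less_eq_Suc_le linorder_not_less permutes_in_seg permutes_not_in plus_1_eq_Suc)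
  done

lemma Fwd30: assumes f: "f permutes {1..n}" and n: "2 \<le> n" shows "Occ n f [1,3,2] {3} {2,3} \<Longrightarrow> f n = n-1 \<and> f 1 \<noteq> n"
  unfolding OccE_132 apply (elim exE conjE)
  apply (simp)?
  using pf[OF f] n by (metis linorder_not_less)

lemma Bwd30: assumes f: "f permutes {1..n}" and n: "2 \<le> n" shows "f n = n-1 \<and> f 1 \<noteq> n \<Longrightarrow> Occ n f [1,3,2] {3} {2,3}"
  apply (elim conjE)
  apply (unfold OccE_132)
  apply (rule exI[of _ "1"], rule exI[of _ "inv f n"], rule exI[of _ "n"], rule exI[of _ "f 1"], rule exI[of _ "n-1"], rule exI[of _ "n"])
  apply (simp)?
  using pf[OF f] n by (smt (verit, ccfv_SIG) One_nat_def Suc_1 diff_Suc_Suc diff_diff_cancel f less_Suc_eq_le nless_le permutes_in_seg permutes_not_in zero_less_Suc zero_less_diff)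

lemma Fwd31: assumes f: "f permutes {1..n}" and n: "2 \<le> n" shows "Occ n f [1,3,2] {0,3} {0,3} \<Longrightarrow> f 1 = 1 \<and> f n \<noteq> n"
  unfolding OccE_132 apply (elim exE conjE)
  apply simp
  done

lemma Bwd31: assumes f: "f permutes {1..n}" and n: "2 \<le> n" shows "f 1 = 1 \<and> f n \<noteq> n \<Longrightarrow> Occ n f [1,3,2] {0,3} {0,3}"
  apply (elim conjE)
  apply (unfold OccE_132)
  apply (rule exI[of _ "1"], rule exI[of _ "inv f n"], rule exI[of _ "n"], rule exI[of _ "1"], rule exI[of _ "f n"], rule exI[of _ "n"])
  apply (simp)?
  using pf[OF f] n by (smt (verit) One_nat_def f order_neq_le_trans permutes_in_seg permutes_not_in)

lemma Fwd32: assumes f: "f permutes {1..n}" and n: "2 \<le> n" shows "Occ n f [1,3,2] {0,3} {1,3} \<Longrightarrow> \<exists>a\<in>{1..n-2}. f 1 = a \<and> f n = a+1"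
  unfolding OccE_132 apply (elim exE conjE)
  subgoal for p1 p2 p3 q1 q2 q3
  apply (rule bexI1[of "q1"])
  apply simp
  done
  done

lemma Bwd32: assumes f: "f permutes {1..n}" and n: "2 \<le> n" shows "\<exists>a\<in>{1..n-2}. f 1 = a \<and> f n = a+1 \<Longrightarrow> Occ n f [1,3,2] {0,3} {1,3}"
  apply (elim bexE conjE)
  subgoal for a
  apply (unfold OccE_132)
  apply (rule exI[of _ "1"], rule exI[of _ "inv f n"], rule exI[of _ "n"], rule exI[of _ "a"], rule exI[of _ "a+1"], rule exI[of _ "n"])
  apply (simp)?
  using pf[OF f] n by (smt (verit, best) Nat.add_diff_assoc One_nat_def Suc_1 add_diff_cancel_left diff_add_inverse f le_imp_less_Suc nat_less_le permutes_in_seg permutes_not_in plus_1_eq_Suc)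
  done

lemma Fwd33: assumes f: "f permutes {1..n}" and n: "2 \<le> n" shows "Occ n f [1,3,2] {0,3} {2,3} \<Longrightarrow> f n = n-1 \<and> f 1 \<noteq> n"
  unfolding OccE_132 apply (elim exE conjE)
  apply simp
  done

lemma Bwd33: assumes f: "f permutes {1..n}" and n: "2 \<le> n" shows "f n = n-1 \<and> f 1 \<noteq> n \<Longrightarrow> Occ n f [1,3,2] {0,3} {2,3}"
  apply (elim conjE)
  apply (unfold OccE_132)
  apply (rule exI[of _ "1"], rule exI[of _ "inv f n"], rule exI[of _ "n"], rule exI[of _ "f 1"], rule exI[of _ "n-1"], rule exI[of _ "n"])
  apply (simp)?
  using pf[OF f] n by (smt (verit) Suc_1 add_diff_inverse_nat antisym_conv2 diff_Suc_1' diff_le_self f less_2_cases_iff less_eq_Suc_le linorder_not_less permutes_in_seg permutes_inverses(1) permutes_not_in plus_1_eq_Suc)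

lemma Fwd34: assumes f: "f permutes {1..n}" and n: "2 \<le> n" shows "Occ n f [1,3,2] {1,3} {1,3} \<Longrightarrow> \<exists>a\<in>{1..n-2}. \<exists>i\<in>{1..n-2}. f i = a \<and> f (i+1) = n \<and> f n = a+1"
  unfolding OccE_132 apply (elim exE conjE)
  subgoal for p1 p2 p3 q1 q2 q3
  apply (rule bexI2[of "q1" _ "p1"])
  apply (simp)?
  using pf[OF f] n using plus_1_eq_Suc by linarith
  done

lemma Bwd34: assumes f: "f permutes {1..n}" and n: "2 \<le> n" shows "\<exists>a\<in>{1..n-2}. \<exists>i\<in>{1..n-2}. f i = a \<and> f (i+1) = n \<and> f n = a+1 \<Longrightarrow> Occ n f [1,3,2] {1,3} {1,3}"
  apply (elim bexE conjE)
  subgoal for a i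
  apply (unfold OccE_132)
  apply (rule exI[of _ "i"], rule exI[of _ "i+1"], rule exI[of _ "n"], rule exI[of _ "a"], rule exI[of _ "a+1"], rule exI[of _ "n"])
  apply (simp)?
  using pf[OF f] n by linarith
  done

lemma Fwd35: assumes f: "f permutes {1..n}" and n: "2 \<le> n" shows "Occ n f [1,3,2] {1,3} {2,3} \<Longrightarrow> f n = n-1 \<and> f 1 \<noteq> n"
  unfolding OccE_132 apply (elim exE conjE)
  apply (simp)?
  using pf[OF f] n by (metis Suc_n_not_le_n)

lemma Bwd35: assumes f: "f permutes {1..n}" and n: "2 \<le> n" shows "f n = n-1 \<and> f 1 \<noteq> n \<Longrightarrow> Occ n f [1,3,2] {1,3} {2,3}"
  apply (elim conjE)
  apply (unfold OccE_132)
  apply (rule exI[of _ "inv f n - 1"], rule exI[of _ "inv f n"], rule exI[of _ "n"], rule exI[of _ "f (inv f n - 1)"], rule exI[of _ "n-1"], rule exI[of _ "n"])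
  apply (simp)?
  using pf[OF f] n by (smt (verit, best) Suc_1 add_diff_inverse_nat antisym_conv2 diff_Suc_1' diff_le_self f less_eq_Suc_le linorder_not_less permutes_in_seg permutes_not_in plus_1_eq_Suc zero_less_Suc)

lemma an_from_count:
  assumes v: "valid3 \<sigma>" and c: "card {f. f permutes {1..n} \<and> Occ n f \<sigma> X Y} = c"
  shows "a_n n (\<sigma>,X,Y) = fact n - c"
proof -
  have e: "{f. f permutes {1..n} \<and> \<not> Occ n f \<sigma> X Y} = {f. f permutes {1..n}} - {f. f permutes {1..n} \<and> Occ n f \<sigma> X Y}" by auto
  have fin: "finite {f. f permutes {1..n} \<and> Occ n f \<sigma> X Y}" using finite_permutations[of "{1..n}"] by (auto intro: rev_finite_subset)
  have cp: "card {f. f permutes {1..n}} = fact n" by (rule card_permutations) auto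
  show ?thesis unfolding an_Occ[OF v] e by (subst card_Diff_subset) (use fin cp c in auto)
qed

lemma A1: assumes "2 \<le> n" shows "a_n n ([1,2,3], {0}, {0,1}) = fact n - fact (n - 2) * (n - 2)"
proof (rule an_from_count)
  show "valid3 [1,2,3]" by (auto simp: valid3_def)
  have "card {f. f permutes {1..n} \<and> Occ n f [1,2,3] {0} {0,1}} = card {f. f permutes {1..n} \<and> (f 1 = 1 \<and> f n \<noteq> 2)}"
    by (rule cnt_eq) (use Fwd1[OF _ assms] Bwd1[OF _ assms] in blast)
  then show "card {f. f permutes {1..n} \<and> Occ n f [1,2,3] {0} {0,1}} = fact (n - 2) * (n - 2)" using c1[OF assms] by simp
qed

lemma A2: assumes "2 \<le> n" shows "a_n n ([1,2,3], {0}, {0,3}) = fact n - fact (n - 2) * (n - 2)"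
proof (rule an_from_count)
  show "valid3 [1,2,3]" by (auto simp: valid3_def)
  have "card {f. f permutes {1..n} \<and> Occ n f [1,2,3] {0} {0,3}} = card {f. f permutes {1..n} \<and> (f 1 = 1 \<and> f 2 \<noteq> n)}"
    by (rule cnt_eq) (use Fwd2[OF _ assms] Bwd2[OF _ assms] in blast)
  then show "card {f. f permutes {1..n} \<and> Occ n f [1,2,3] {0} {0,3}} = fact (n - 2) * (n - 2)" using c2[OF assms] by simp
qed

lemma A3: assumes "2 \<le> n" shows "a_n n ([1,2,3], {1}, {0,1}) = fact n - fact (n - 2) * (n - 2)"
proof (rule an_from_count)
  show "valid3 [1,2,3]" by (auto simp: valid3_def)
  have "card {f. f permutes {1..n} \<and> Occ n f [1,2,3] {1} {0,1}} = card {f. f permutes {1..n} \<and> (\<exists>i\<in>{1..n-2}. f i = 1 \<and> f (i+1) = 2)}"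
    by (rule cnt_eq) (use Fwd3[OF _ assms] Bwd3[OF _ assms] in blast)
  then show "card {f. f permutes {1..n} \<and> Occ n f [1,2,3] {1} {0,1}} = fact (n - 2) * (n - 2)" using c3[OF assms] by simp
qed

lemma A4: assumes "2 \<le> n" shows "a_n n ([1,2,3], {0,1}, {0,2}) = fact n - fact (n - 2) * (n - 2)"
proof (rule an_from_count)
  show "valid3 [1,2,3]" by (auto simp: valid3_def)
  have "card {f. f permutes {1..n} \<and> Occ n f [1,2,3] {0,1} {0,2}} = card {f. f permutes {1..n} \<and> (f 1 = 1 \<and> f 2 \<noteq> n)}"
    by (rule cnt_eq) (use Fwd4[OF _ assms] Bwd4[OF _ assms] in blast)
  then show "card {f. f permutes {1..n} \<and> Occ n f [1,2,3] {0,1} {0,2}} = fact (n - 2) * (n - 2)" using c2[OF assms] by simp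
qed

lemma A5: assumes "2 \<le> n" shows "a_n n ([1,2,3], {0,1}, {1,2}) = fact n - fact (n - 2) * (n - 2)"
proof (rule an_from_count)
  show "valid3 [1,2,3]" by (auto simp: valid3_def)
  have "card {f. f permutes {1..n} \<and> Occ n f [1,2,3] {0,1} {1,2}} = card {f. f permutes {1..n} \<and> (\<exists>a\<in>{1..n-2}. f 1 = a \<and> f 2 = a+1)}"
    by (rule cnt_eq) (use Fwd5[OF _ assms] Bwd5[OF _ assms] in blast)
  then show "card {f. f permutes {1..n} \<and> Occ n f [1,2,3] {0,1} {1,2}} = fact (n - 2) * (n - 2)" using c4[OF assms] by simp
qed

lemma A6: assumes "2 \<le> n" shows "a_n n ([1,2,3], {0,1}, {0,3}) = fact n - fact (n - 2) * (n - 2)"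
proof (rule an_from_count)
  show "valid3 [1,2,3]" by (auto simp: valid3_def)
  have "card {f. f permutes {1..n} \<and> Occ n f [1,2,3] {0,1} {0,3}} = card {f. f permutes {1..n} \<and> (f 1 = 1 \<and> f 2 \<noteq> n)}"
    by (rule cnt_eq) (use Fwd6[OF _ assms] Bwd6[OF _ assms] in blast)
  then show "card {f. f permutes {1..n} \<and> Occ n f [1,2,3] {0,1} {0,3}} = fact (n - 2) * (n - 2)" using c2[OF assms] by simp
qed

lemma A7: assumes "2 \<le> n" shows "a_n n ([1,2,3], {0,1}, {1,3}) = fact n - fact (n - 2) * (n - 2)"
proof (rule an_from_count)
  show "valid3 [1,2,3]" by (auto simp: valid3_def)
  have "card {f. f permutes {1..n} \<and> Occ n f [1,2,3] {0,1} {1,3}} = card {f. f permutes {1..n} \<and> (\<exists>a\<in>{1..n-2}. f 1 = a \<and> f 2 = a+1)}"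
    by (rule cnt_eq) (use Fwd7[OF _ assms] Bwd7[OF _ assms] in blast)
  then show "card {f. f permutes {1..n} \<and> Occ n f [1,2,3] {0,1} {1,3}} = fact (n - 2) * (n - 2)" using c4[OF assms] by simp
qed

lemma A8: assumes "2 \<le> n" shows "a_n n ([1,2,3], {0,1}, {2,3}) = fact n - fact (n - 2) * (n - 2)"
proof (rule an_from_count)
  show "valid3 [1,2,3]" by (auto simp: valid3_def)
  have "card {f. f permutes {1..n} \<and> Occ n f [1,2,3] {0,1} {2,3}} = card {f. f permutes {1..n} \<and> (f 2 = n-1 \<and> f 1 \<noteq> n)}"
    by (rule cnt_eq) (use Fwd8[OF _ assms] Bwd8[OF _ assms] in blast)
  then show "card {f. f permutes {1..n} \<and> Occ n f [1,2,3] {0,1} {2,3}} = fact (n - 2) * (n - 2)" using c5[OF assms] by simp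
qed

lemma A9: assumes "2 \<le> n" shows "a_n n ([1,2,3], {0,2}, {1,2}) = fact n - fact (n - 2) * (n - 2)"
proof (rule an_from_count)
  show "valid3 [1,2,3]" by (auto simp: valid3_def)
  have "card {f. f permutes {1..n} \<and> Occ n f [1,2,3] {0,2} {1,2}} = card {f. f permutes {1..n} \<and> (\<exists>a\<in>{1..n-2}. \<exists>i\<in>{2..n-1}. f 1 = a \<and> f i = a+1 \<and> f (i+1) = a+2)}"
    by (rule cnt_eq) (use Fwd9[OF _ assms] Bwd9[OF _ assms] in blast)
  then show "card {f. f permutes {1..n} \<and> Occ n f [1,2,3] {0,2} {1,2}} = fact (n - 2) * (n - 2)" using c6[OF assms] by simp
qed

lemma A10: assumes "2 \<le> n" shows "a_n n ([1,2,3], {0,2}, {0,3}) = fact n - fact (n - 2) * (n - 2)"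
proof (rule an_from_count)
  show "valid3 [1,2,3]" by (auto simp: valid3_def)
  have "card {f. f permutes {1..n} \<and> Occ n f [1,2,3] {0,2} {0,3}} = card {f. f permutes {1..n} \<and> (f 1 = 1 \<and> f 2 \<noteq> n)}"
    by (rule cnt_eq) (use Fwd10[OF _ assms] Bwd10[OF _ assms] in blast)
  then show "card {f. f permutes {1..n} \<and> Occ n f [1,2,3] {0,2} {0,3}} = fact (n - 2) * (n - 2)" using c2[OF assms] by simp
qed

lemma A11: assumes "2 \<le> n" shows "a_n n ([1,2,3], {0,2}, {1,3}) = fact n - fact (n - 2) * (n - 2)"
proof (rule an_from_count)
  show "valid3 [1,2,3]" by (auto simp: valid3_def)
  have "card {f. f permutes {1..n} \<and> Occ n f [1,2,3] {0,2} {1,3}} = card {f. f permutes {1..n} \<and> (\<exists>a\<in>{1..n-2}. \<exists>i\<in>{2..n-1}. f 1 = a \<and> f i = a+1 \<and> f (i+1) = n)}"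
    by (rule cnt_eq) (use Fwd11[OF _ assms] Bwd11[OF _ assms] in blast)
  then show "card {f. f permutes {1..n} \<and> Occ n f [1,2,3] {0,2} {1,3}} = fact (n - 2) * (n - 2)" using c7[OF assms] by simp
qed

lemma A12: assumes "2 \<le> n" shows "a_n n ([1,2,3], {1,2}, {0,3}) = fact n - fact (n - 2) * (n - 2)"
proof (rule an_from_count)
  show "valid3 [1,2,3]" by (auto simp: valid3_def)
  have "card {f. f permutes {1..n} \<and> Occ n f [1,2,3] {1,2} {0,3}} = card {f. f permutes {1..n} \<and> (\<exists>i\<in>{1..n-2}. f i = 1 \<and> f (i+2) = n)}"
    by (rule cnt_eq) (use Fwd12[OF _ assms] Bwd12[OF _ assms] in blast)
  then show "card {f. f permutes {1..n} \<and> Occ n f [1,2,3] {1,2} {0,3}} = fact (n - 2) * (n - 2)" using c8[OF assms] by simp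
qed

lemma A13: assumes "2 \<le> n" shows "a_n n ([1,3,2], {0}, {0,1}) = fact n - fact (n - 2) * (n - 2)"
proof (rule an_from_count)
  show "valid3 [1,3,2]" by (auto simp: valid3_def)
  have "card {f. f permutes {1..n} \<and> Occ n f [1,3,2] {0} {0,1}} = card {f. f permutes {1..n} \<and> (f 1 = 1 \<and> f 2 \<noteq> 2)}"
    by (rule cnt_eq) (use Fwd13[OF _ assms] Bwd13[OF _ assms] in blast)
  then show "card {f. f permutes {1..n} \<and> Occ n f [1,3,2] {0} {0,1}} = fact (n - 2) * (n - 2)" using c9[OF assms] by simp
qed

lemma A14: assumes "2 \<le> n" shows "a_n n ([1,3,2], {0}, {0,3}) = fact n - fact (n - 2) * (n - 2)"
proof (rule an_from_count)
  show "valid3 [1,3,2]" by (auto simp: valid3_def)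
  have "card {f. f permutes {1..n} \<and> Occ n f [1,3,2] {0} {0,3}} = card {f. f permutes {1..n} \<and> (f 1 = 1 \<and> f n \<noteq> n)}"
    by (rule cnt_eq) (use Fwd14[OF _ assms] Bwd14[OF _ assms] in blast)
  then show "card {f. f permutes {1..n} \<and> Occ n f [1,3,2] {0} {0,3}} = fact (n - 2) * (n - 2)" using c10[OF assms] by simp
qed

lemma A15: assumes "2 \<le> n" shows "a_n n ([1,3,2], {1}, {0,3}) = fact n - fact (n - 2) * (n - 2)"
proof (rule an_from_count)
  show "valid3 [1,3,2]" by (auto simp: valid3_def)
  have "card {f. f permutes {1..n} \<and> Occ n f [1,3,2] {1} {0,3}} = card {f. f permutes {1..n} \<and> (\<exists>i\<in>{1..n-2}. f i = 1 \<and> f (i+1) = n)}"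
    by (rule cnt_eq) (use Fwd15[OF _ assms] Bwd15[OF _ assms] in blast)
  then show "card {f. f permutes {1..n} \<and> Occ n f [1,3,2] {1} {0,3}} = fact (n - 2) * (n - 2)" using c11[OF assms] by simp
qed

lemma A16: assumes "2 \<le> n" shows "a_n n ([1,3,2], {0,1}, {0,1}) = fact n - fact (n - 2) * (n - 2)"
proof (rule an_from_count)
  show "valid3 [1,3,2]" by (auto simp: valid3_def)
  have "card {f. f permutes {1..n} \<and> Occ n f [1,3,2] {0,1} {0,1}} = card {f. f permutes {1..n} \<and> (f 1 = 1 \<and> f 2 \<noteq> 2)}"
    by (rule cnt_eq) (use Fwd16[OF _ assms] Bwd16[OF _ assms] in blast)
  then show "card {f. f permutes {1..n} \<and> Occ n f [1,3,2] {0,1} {0,1}} = fact (n - 2) * (n - 2)" using c9[OF assms] by simp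
qed

lemma A17: assumes "2 \<le> n" shows "a_n n ([1,3,2], {0,1}, {0,2}) = fact n - fact (n - 2) * (n - 2)"
proof (rule an_from_count)
  show "valid3 [1,3,2]" by (auto simp: valid3_def)
  have "card {f. f permutes {1..n} \<and> Occ n f [1,3,2] {0,1} {0,2}} = card {f. f permutes {1..n} \<and> (f 1 = 1 \<and> f 2 \<noteq> 2)}"
    by (rule cnt_eq) (use Fwd17[OF _ assms] Bwd17[OF _ assms] in blast)
  then show "card {f. f permutes {1..n} \<and> Occ n f [1,3,2] {0,1} {0,2}} = fact (n - 2) * (n - 2)" using c9[OF assms] by simp
qed

lemma A18: assumes "2 \<le> n" shows "a_n n ([1,3,2], {0,1}, {1,2}) = fact n - fact (n - 2) * (n - 2)"
proof (rule an_from_count)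
  show "valid3 [1,3,2]" by (auto simp: valid3_def)
  have "card {f. f permutes {1..n} \<and> Occ n f [1,3,2] {0,1} {1,2}} = card {f. f permutes {1..n} \<and> (\<exists>a\<in>{1..n-2}. f 1 = a \<and> f 2 = a+2)}"
    by (rule cnt_eq) (use Fwd18[OF _ assms] Bwd18[OF _ assms] in blast)
  then show "card {f. f permutes {1..n} \<and> Occ n f [1,3,2] {0,1} {1,2}} = fact (n - 2) * (n - 2)" using c12[OF assms] by simp
qed

lemma A19: assumes "2 \<le> n" shows "a_n n ([1,3,2], {0,1}, {3}) = fact n - fact (n - 2) * (n - 2)"
proof (rule an_from_count)
  show "valid3 [1,3,2]" by (auto simp: valid3_def)
  have "card {f. f permutes {1..n} \<and> Occ n f [1,3,2] {0,1} {3}} = card {f. f permutes {1..n} \<and> (f 2 = n \<and> f 1 \<noteq> n-1)}"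
    by (rule cnt_eq) (use Fwd19[OF _ assms] Bwd19[OF _ assms] in blast)
  then show "card {f. f permutes {1..n} \<and> Occ n f [1,3,2] {0,1} {3}} = fact (n - 2) * (n - 2)" using c13[OF assms] by simp
qed

lemma A20: assumes "2 \<le> n" shows "a_n n ([1,3,2], {0,1}, {1,3}) = fact n - fact (n - 2) * (n - 2)"
proof (rule an_from_count)
  show "valid3 [1,3,2]" by (auto simp: valid3_def)
  have "card {f. f permutes {1..n} \<and> Occ n f [1,3,2] {0,1} {1,3}} = card {f. f permutes {1..n} \<and> (f 2 = n \<and> f 1 \<noteq> n-1)}"
    by (rule cnt_eq) (use Fwd20[OF _ assms] Bwd20[OF _ assms] in blast)
  then show "card {f. f permutes {1..n} \<and> Occ n f [1,3,2] {0,1} {1,3}} = fact (n - 2) * (n - 2)" using c13[OF assms] by simp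
qed

lemma A21: assumes "2 \<le> n" shows "a_n n ([1,3,2], {0,1}, {2,3}) = fact n - fact (n - 2) * (n - 2)"
proof (rule an_from_count)
  show "valid3 [1,3,2]" by (auto simp: valid3_def)
  have "card {f. f permutes {1..n} \<and> Occ n f [1,3,2] {0,1} {2,3}} = card {f. f permutes {1..n} \<and> (f 2 = n \<and> f 1 \<noteq> n-1)}"
    by (rule cnt_eq) (use Fwd21[OF _ assms] Bwd21[OF _ assms] in blast)
  then show "card {f. f permutes {1..n} \<and> Occ n f [1,3,2] {0,1} {2,3}} = fact (n - 2) * (n - 2)" using c13[OF assms] by simp
qed

lemma A22: assumes "2 \<le> n" shows "a_n n ([1,3,2], {2}, {2,3}) = fact n - fact (n - 2) * (n - 2)"
proof (rule an_from_count)
  show "valid3 [1,3,2]" by (auto simp: valid3_def)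
  have "card {f. f permutes {1..n} \<and> Occ n f [1,3,2] {2} {2,3}} = card {f. f permutes {1..n} \<and> (\<exists>i\<in>{2..n-1}. f i = n \<and> f (i+1) = n-1)}"
    by (rule cnt_eq) (use Fwd22[OF _ assms] Bwd22[OF _ assms] in blast)
  then show "card {f. f permutes {1..n} \<and> Occ n f [1,3,2] {2} {2,3}} = fact (n - 2) * (n - 2)" using c14[OF assms] by simp
qed

lemma A23: assumes "2 \<le> n" shows "a_n n ([1,3,2], {0,2}, {1,2}) = fact n - fact (n - 2) * (n - 2)"
proof (rule an_from_count)
  show "valid3 [1,3,2]" by (auto simp: valid3_def)
  have "card {f. f permutes {1..n} \<and> Occ n f [1,3,2] {0,2} {1,2}} = card {f. f permutes {1..n} \<and> (\<exists>a\<in>{1..n-2}. \<exists>i\<in>{2..n-1}. f 1 = a \<and> f i = a+2 \<and> f (i+1) = a+1)}"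
    by (rule cnt_eq) (use Fwd23[OF _ assms] Bwd23[OF _ assms] in blast)
  then show "card {f. f permutes {1..n} \<and> Occ n f [1,3,2] {0,2} {1,2}} = fact (n - 2) * (n - 2)" using c15[OF assms] by simp
qed

lemma A24: assumes "2 \<le> n" shows "a_n n ([1,3,2], {0,2}, {0,3}) = fact n - fact (n - 2) * (n - 2)"
proof (rule an_from_count)
  show "valid3 [1,3,2]" by (auto simp: valid3_def)
  have "card {f. f permutes {1..n} \<and> Occ n f [1,3,2] {0,2} {0,3}} = card {f. f permutes {1..n} \<and> (f 1 = 1 \<and> f n \<noteq> n)}"
    by (rule cnt_eq) (use Fwd24[OF _ assms] Bwd24[OF _ assms] in blast)
  then show "card {f. f permutes {1..n} \<and> Occ n f [1,3,2] {0,2} {0,3}} = fact (n - 2) * (n - 2)" using c10[OF assms] by simp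
qed

lemma A25: assumes "2 \<le> n" shows "a_n n ([1,3,2], {0,2}, {1,3}) = fact n - fact (n - 2) * (n - 2)"
proof (rule an_from_count)
  show "valid3 [1,3,2]" by (auto simp: valid3_def)
  have "card {f. f permutes {1..n} \<and> Occ n f [1,3,2] {0,2} {1,3}} = card {f. f permutes {1..n} \<and> (\<exists>a\<in>{1..n-2}. \<exists>i\<in>{2..n-1}. f 1 = a \<and> f i = n \<and> f (i+1) = a+1)}"
    by (rule cnt_eq) (use Fwd25[OF _ assms] Bwd25[OF _ assms] in blast)
  then show "card {f. f permutes {1..n} \<and> Occ n f [1,3,2] {0,2} {1,3}} = fact (n - 2) * (n - 2)" using c16[OF assms] by simp
qed

lemma A26: assumes "2 \<le> n" shows "a_n n ([1,3,2], {0,2}, {2,3}) = fact n - fact (n - 2) * (n - 2)"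
proof (rule an_from_count)
  show "valid3 [1,3,2]" by (auto simp: valid3_def)
  have "card {f. f permutes {1..n} \<and> Occ n f [1,3,2] {0,2} {2,3}} = card {f. f permutes {1..n} \<and> (\<exists>i\<in>{2..n-1}. f i = n \<and> f (i+1) = n-1)}"
    by (rule cnt_eq) (use Fwd26[OF _ assms] Bwd26[OF _ assms] in blast)
  then show "card {f. f permutes {1..n} \<and> Occ n f [1,3,2] {0,2} {2,3}} = fact (n - 2) * (n - 2)" using c14[OF assms] by simp
qed

lemma A27: assumes "2 \<le> n" shows "a_n n ([1,3,2], {1,2}, {0,3}) = fact n - fact (n - 2) * (n - 2)"
proof (rule an_from_count)
  show "valid3 [1,3,2]" by (auto simp: valid3_def)
  have "card {f. f permutes {1..n} \<and> Occ n f [1,3,2] {1,2} {0,3}} = card {f. f permutes {1..n} \<and> (\<exists>i\<in>{1..n-2}. f i = 1 \<and> f (i+1) = n)}"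
    by (rule cnt_eq) (use Fwd27[OF _ assms] Bwd27[OF _ assms] in blast)
  then show "card {f. f permutes {1..n} \<and> Occ n f [1,3,2] {1,2} {0,3}} = fact (n - 2) * (n - 2)" using c11[OF assms] by simp
qed

lemma A28: assumes "2 \<le> n" shows "a_n n ([1,3,2], {1,2}, {1,3}) = fact n - fact (n - 2) * (n - 2)"
proof (rule an_from_count)
  show "valid3 [1,3,2]" by (auto simp: valid3_def)
  have "card {f. f permutes {1..n} \<and> Occ n f [1,3,2] {1,2} {1,3}} = card {f. f permutes {1..n} \<and> (\<exists>a\<in>{1..n-2}. \<exists>i\<in>{1..n-2}. f i = a \<and> f (i+1) = n \<and> f (i+2) = a+1)}"
    by (rule cnt_eq) (use Fwd28[OF _ assms] Bwd28[OF _ assms] in blast)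
  then show "card {f. f permutes {1..n} \<and> Occ n f [1,3,2] {1,2} {1,3}} = fact (n - 2) * (n - 2)" using c17[OF assms] by simp
qed

lemma A29: assumes "2 \<le> n" shows "a_n n ([1,3,2], {1,2}, {2,3}) = fact n - fact (n - 2) * (n - 2)"
proof (rule an_from_count)
  show "valid3 [1,3,2]" by (auto simp: valid3_def)
  have "card {f. f permutes {1..n} \<and> Occ n f [1,3,2] {1,2} {2,3}} = card {f. f permutes {1..n} \<and> (\<exists>i\<in>{2..n-1}. f i = n \<and> f (i+1) = n-1)}"
    by (rule cnt_eq) (use Fwd29[OF _ assms] Bwd29[OF _ assms] in blast)
  then show "card {f. f permutes {1..n} \<and> Occ n f [1,3,2] {1,2} {2,3}} = fact (n - 2) * (n - 2)" using c14[OF assms] by simp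
qed

lemma A30: assumes "2 \<le> n" shows "a_n n ([1,3,2], {3}, {2,3}) = fact n - fact (n - 2) * (n - 2)"
proof (rule an_from_count)
  show "valid3 [1,3,2]" by (auto simp: valid3_def)
  have "card {f. f permutes {1..n} \<and> Occ n f [1,3,2] {3} {2,3}} = card {f. f permutes {1..n} \<and> (f n = n-1 \<and> f 1 \<noteq> n)}"
    by (rule cnt_eq) (use Fwd30[OF _ assms] Bwd30[OF _ assms] in blast)
  then show "card {f. f permutes {1..n} \<and> Occ n f [1,3,2] {3} {2,3}} = fact (n - 2) * (n - 2)" using c18[OF assms] by simp
qed

lemma A31: assumes "2 \<le> n" shows "a_n n ([1,3,2], {0,3}, {0,3}) = fact n - fact (n - 2) * (n - 2)"
proof (rule an_from_count)
  show "valid3 [1,3,2]" by (auto simp: valid3_def)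
  have "card {f. f permutes {1..n} \<and> Occ n f [1,3,2] {0,3} {0,3}} = card {f. f permutes {1..n} \<and> (f 1 = 1 \<and> f n \<noteq> n)}"
    by (rule cnt_eq) (use Fwd31[OF _ assms] Bwd31[OF _ assms] in blast)
  then show "card {f. f permutes {1..n} \<and> Occ n f [1,3,2] {0,3} {0,3}} = fact (n - 2) * (n - 2)" using c10[OF assms] by simp
qed

lemma A32: assumes "2 \<le> n" shows "a_n n ([1,3,2], {0,3}, {1,3}) = fact n - fact (n - 2) * (n - 2)"
proof (rule an_from_count)
  show "valid3 [1,3,2]" by (auto simp: valid3_def)
  have "card {f. f permutes {1..n} \<and> Occ n f [1,3,2] {0,3} {1,3}} = card {f. f permutes {1..n} \<and> (\<exists>a\<in>{1..n-2}. f 1 = a \<and> f n = a+1)}"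
    by (rule cnt_eq) (use Fwd32[OF _ assms] Bwd32[OF _ assms] in blast)
  then show "card {f. f permutes {1..n} \<and> Occ n f [1,3,2] {0,3} {1,3}} = fact (n - 2) * (n - 2)" using c19[OF assms] by simp
qed

lemma A33: assumes "2 \<le> n" shows "a_n n ([1,3,2], {0,3}, {2,3}) = fact n - fact (n - 2) * (n - 2)"
proof (rule an_from_count)
  show "valid3 [1,3,2]" by (auto simp: valid3_def)
  have "card {f. f permutes {1..n} \<and> Occ n f [1,3,2] {0,3} {2,3}} = card {f. f permutes {1..n} \<and> (f n = n-1 \<and> f 1 \<noteq> n)}"
    by (rule cnt_eq) (use Fwd33[OF _ assms] Bwd33[OF _ assms] in blast)
  then show "card {f. f permutes {1..n} \<and> Occ n f [1,3,2] {0,3} {2,3}} = fact (n - 2) * (n - 2)" using c18[OF assms] by simp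
qed

lemma A34: assumes "2 \<le> n" shows "a_n n ([1,3,2], {1,3}, {1,3}) = fact n - fact (n - 2) * (n - 2)"
proof (rule an_from_count)
  show "valid3 [1,3,2]" by (auto simp: valid3_def)
  have "card {f. f permutes {1..n} \<and> Occ n f [1,3,2] {1,3} {1,3}} = card {f. f permutes {1..n} \<and> (\<exists>a\<in>{1..n-2}. \<exists>i\<in>{1..n-2}. f i = a \<and> f (i+1) = n \<and> f n = a+1)}"
    by (rule cnt_eq) (use Fwd34[OF _ assms] Bwd34[OF _ assms] in blast)
  then show "card {f. f permutes {1..n} \<and> Occ n f [1,3,2] {1,3} {1,3}} = fact (n - 2) * (n - 2)" using c20[OF assms] by simp
qed

lemma A35: assumes "2 \<le> n" shows "a_n n ([1,3,2], {1,3}, {2,3}) = fact n - fact (n - 2) * (n - 2)"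
proof (rule an_from_count)
  show "valid3 [1,3,2]" by (auto simp: valid3_def)
  have "card {f. f permutes {1..n} \<and> Occ n f [1,3,2] {1,3} {2,3}} = card {f. f permutes {1..n} \<and> (f n = n-1 \<and> f 1 \<noteq> n)}"
    by (rule cnt_eq) (use Fwd35[OF _ assms] Bwd35[OF _ assms] in blast)
  then show "card {f. f permutes {1..n} \<and> Occ n f [1,3,2] {1,3} {2,3}} = fact (n - 2) * (n - 2)" using c18[OF assms] by simp
qed

lemma base_an:
  assumes "q \<in> set thm16_patterns" "2 \<le> n"
  shows "a_n n q = fact n - fact (n - 2) * (n - 2) \<and> validp q"
  using assms(1) unfolding thm16_patterns_def
  apply (simp only: set_simps insert_iff empty_iff simp_thms)
  apply (elim disjE)
  by (simp_all only: A1[OF assms(2)] A2[OF assms(2)] A3[OF assms(2)] A4[OF assms(2)] A5[OF assms(2)] A6[OF assms(2)] A7[OF assms(2)] A8[OF assms(2)] A9[OF assms(2)] A10[OF assms(2)] A11[OF assms(2)] A12[OF assms(2)] A13[OF assms(2)] A14[OF assms(2)] A15[OF assms(2)] A16[OF assms(2)] A17[OF assms(2)] A18[OF assms(2)] A19[OF assms(2)] A20[OF assms(2)] A21[OF assms(2)] A22[OF assms(2)] A23[OF assms(2)] A24[OF assms(2)] A25[OF assms(2)] A26[OF assms(2)] A27[OF assms(2)] A28[OF assms(2)] A29[OF assms(2)] A30[OF assms(2)] A31[OF assms(2)] A32[OF assms(2)] A33[OF assms(2)] A34[OF assms(2)] A35[OF assms(2)]) (auto simp: validp_def valid3_def)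

theorem mainTheorem16:
  fixes p :: bvpattern and n :: nat
  assumes "p \<in> (\<Union>q\<in>set thm16_patterns. sym_class q)"
    and "n \<ge> 2"
  shows "a_n n p = fact n - fact (n - 2) * (n - 2)"
proof -
  obtain q where q: "q \<in> set thm16_patterns" "p \<in> sym_class q" using assms(1) by blast
  have "validp q" "a_n n q = fact n - fact (n - 2) * (n - 2)" using base_an[OF q(1) assms(2)] by auto
  then show ?thesis using sym_class_inv[OF q(2)] by simp
qed

end
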